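(* Let $d\ge 2$ and $N\ge 2$. Let $A'_1,\dots,A'_N,A_1,\dots,A_N,\tilde A,B$ be quantum systems, each with Hilbert space $\mathbb{C}^d$, and let $\psi^+_{XY}$ denote the maximally entangled state $|\psi^+\rangle\langle\psi^+|$, $|\psi^+\rangle=\frac1{\sqrt d}\sum_{i=0}^{d-1}|ii\rangle$, on two such systems. Let $\rho_{\tilde AB}$ be an arbitrary state on $\tilde AB$, let $\{M^{(i)}\}_{i=1}^K$ (any $K\ge1$) be a POVM on $A_1\cdots A_N\tilde A$, and for each $i$ and $j\in\{1,\dots,N\}$ let $U^{(i,j)}_B$ be a unitary on $B$. Set $\Omega=\bigotimes_{l=1}^N\psi^+_{A'_lA_l}\otimes\rho_{\tilde AB}$ and $$P_{\mathrm{succ}}=\frac1N\sum_{j=1}^{N}\sum_{i=1}^{K}\operatorname{tr}\Big[\psi^+_{A'_jB}\,U^{(i,j)}_B\,\operatorname{tr}_{\text{all but }A'_jB}\big[(M^{(i)}\otimes\mathbf 1)\,\Omega\big]\,U^{(i,j)\dagger}_B\Big].$$ Then $$P_{\mathrm{succ}}\le\frac{N+d-1}{dN}.$$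
   Context: This models the symmetric constrained-entanglement quantum random access code with $N$ inputs: Alice holds $N$ $d$-dimensional inputs (purified by $A'_l$), shares only a $d\times d$ state with Bob, sends the (unrestricted) classical outcome $i$, and Bob, given his uniformly random choice $j$, applies a unitary to recover input $j$; $P_{\mathrm{succ}}$ is the average entanglement fidelity of $B$ with $A'_j$. *)

theory Defs
  imports Complex_Main "HOL-Library.FuncSet" "HOL-Library.Complex_Order"
begin

text \<open>Quantum systems are labelled by
natural numbers; each has Hilbert space C^d with computational basis 0..d-1.
A basis vector of the composite system on a finite label set S is a configuration
in PiE S (lambda _. {..<d}).\<close>

type_synonym cfg = "nat \<Rightarrow> nat"
type_synonym qop = "cfg \<Rightarrow> cfg \<Rightarrow> complex"

definition basis :: "nat \<Rightarrow> nat set \<Rightarrow> cfg set" where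
  "basis d S = PiE S (\<lambda>_. {..<d})"

definition mmul :: "nat \<Rightarrow> nat set \<Rightarrow> qop \<Rightarrow> qop \<Rightarrow> qop" where
  "mmul d S X Y = (\<lambda>x y. \<Sum>z\<in>basis d S. X x z * Y z y)"

definition adj :: "qop \<Rightarrow> qop" where
  "adj X = (\<lambda>x y. cnj (X y x))"

definition trace :: "nat \<Rightarrow> nat set \<Rightarrow> qop \<Rightarrow> complex" where
  "trace d S X = (\<Sum>x\<in>basis d S. X x x)"

definition idop :: "nat set \<Rightarrow> qop" where
  "idop S = (\<lambda>x y. if (\<forall>k\<in>S. x k = y k) then 1 else 0)"

definition op_ext :: "nat set \<Rightarrow> qop \<Rightarrow> nat set \<Rightarrow> qop" where
  "op_ext S X U = (\<lambda>x y. X (restrict x S) (restrict y S) *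
                      (if (\<forall>k\<in>U - S. x k = y k) then 1 else 0))"

definition ptrace :: "nat \<Rightarrow> nat set \<Rightarrow> nat set \<Rightarrow> qop \<Rightarrow> qop" where
  "ptrace d U S X = (\<lambda>x y. \<Sum>z\<in>basis d (U - S).
      X (\<lambda>k. if k \<in> S then x k else z k) (\<lambda>k. if k \<in> S then y k else z k))"

text \<open>Positive semidefinite operator on S (complex order: value is real and nonnegative).\<close>
definition psd :: "nat \<Rightarrow> nat set \<Rightarrow> qop \<Rightarrow> bool" where
  "psd d S X \<longleftrightarrow> (\<forall>v :: cfg \<Rightarrow> complex.
      0 \<le> (\<Sum>x\<in>basis d S. \<Sum>y\<in>basis d S. cnj (v x) * X x y * v y))"

definition density :: "nat \<Rightarrow> nat set \<Rightarrow> qop \<Rightarrow> bool" where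
  "density d S X \<longleftrightarrow> psd d S X \<and> trace d S X = 1"

definition unitary_op :: "nat \<Rightarrow> nat set \<Rightarrow> qop \<Rightarrow> bool" where
  "unitary_op d S V \<longleftrightarrow>
     (\<forall>x\<in>basis d S. \<forall>y\<in>basis d S. mmul d S V (adj V) x y = idop S x y) \<and>
     (\<forall>x\<in>basis d S. \<forall>y\<in>basis d S. mmul d S (adj V) V x y = idop S x y)"

definition povm :: "nat \<Rightarrow> nat set \<Rightarrow> nat \<Rightarrow> (nat \<Rightarrow> qop) \<Rightarrow> bool" where
  "povm d S K M \<longleftrightarrow> (\<forall>i\<in>{1..K}. psd d S (M i)) \<and>
     (\<forall>x\<in>basis d S. \<forall>y\<in>basis d S. (\<Sum>i=1..K. M i x y) = idop S x y)"

text \<open>Maximally entangled state psi+ on systems p, q: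
  |psi+> = 1/sqrt d * sum_i |ii>, so <x|psi+><psi+|y> = [x_p = x_q][y_p = y_q] / d.\<close>
definition psi_plus :: "nat \<Rightarrow> nat \<Rightarrow> nat \<Rightarrow> qop" where
  "psi_plus d p q = (\<lambda>x y. if x p = x q \<and> y p = y q then 1 / of_nat d else 0)"

definition sysA' :: "nat \<Rightarrow> nat \<Rightarrow> nat" where "sysA' N l = l"
definition sysA :: "nat \<Rightarrow> nat \<Rightarrow> nat" where "sysA N l = N + l"
definition sysAt :: "nat \<Rightarrow> nat" where "sysAt N = 2 * N + 1"
definition sysB :: "nat \<Rightarrow> nat" where "sysB N = 2 * N + 2"

definition all_sys :: "nat \<Rightarrow> nat set" where
  "all_sys N = sysA' N ` {1..N} \<union> sysA N ` {1..N} \<union> {sysAt N, sysB N}"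

definition alice_sys :: "nat \<Rightarrow> nat set" where
  "alice_sys N = sysA N ` {1..N} \<union> {sysAt N}"

definition AtB_sys :: "nat \<Rightarrow> nat set" where
  "AtB_sys N = {sysAt N, sysB N}"

definition Omega :: "nat \<Rightarrow> nat \<Rightarrow> qop \<Rightarrow> qop" where
  "Omega d N rho = (\<lambda>x y. (\<Prod>l\<in>{1..N}. psi_plus d (sysA' N l) (sysA N l) x y) *
      rho (restrict x (AtB_sys N)) (restrict y (AtB_sys N)))"

definition opB :: "nat \<Rightarrow> (nat \<Rightarrow> nat \<Rightarrow> complex) \<Rightarrow> qop" where
  "opB N U = (\<lambda>x y. U (x (sysB N)) (y (sysB N)))"

definition P_succ :: "nat \<Rightarrow> nat \<Rightarrow> qop \<Rightarrow> nat \<Rightarrow> (nat \<Rightarrow> qop)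
    \<Rightarrow> (nat \<Rightarrow> nat \<Rightarrow> nat \<Rightarrow> nat \<Rightarrow> complex) \<Rightarrow> complex" where
  "P_succ d N rho K M U =
     (1 / of_nat N) * (\<Sum>j\<in>{1..N}. \<Sum>i\<in>{1..K}.
       (let S = {sysA' N j, sysB N};
            sigma = ptrace d (all_sys N) S
                      (mmul d (all_sys N) (op_ext (alice_sys N) (M i) (all_sys N)) (Omega d N rho));
            V = op_ext {sysB N} (opB N (U i j)) S
        in trace d S (mmul d S (psi_plus d (sysA' N j) (sysB N))
                        (mmul d S (mmul d S V sigma) (adj V)))))"

end

theory Submission
  imports Defs
begin

definition merge :: "nat set \<Rightarrow> cfg \<Rightarrow> cfg \<Rightarrow> cfg" where
  "merge S x y = (\<lambda>k. if k \<in> S then x k else y k)"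

lemma finite_basis[simp]: "finite S \<Longrightarrow> finite (basis d S)"
  unfolding basis_def by (intro finite_PiE) auto

lemma merge_in_basis: "a \<in> basis d S \<Longrightarrow> c \<in> basis d T \<Longrightarrow> merge S a c \<in> basis d (S \<union> T)"
  unfolding basis_def merge_def by (auto simp: PiE_def extensional_def Pi_def)

lemma split_basis:
  assumes "S \<inter> T = {}"
  shows "(\<Sum>x\<in>basis d (S \<union> T). F x) = (\<Sum>a\<in>basis d S. \<Sum>c\<in>basis d T. F (merge S a c))"
proof -
  have "(\<Sum>a\<in>basis d S. \<Sum>c\<in>basis d T. F (merge S a c)) = (\<Sum>(a,c)\<in>basis d S \<times> basis d T. F (merge S a c))"
    by (rule sum.cartesian_product)
  also have "\<dots> = (\<Sum>x\<in>basis d (S \<union> T). F x)"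
  proof (rule sum.reindex_bij_witness[where i="\<lambda>x. (restrict x S, restrict x T)" and j="\<lambda>(a,c). merge S a c"])
    fix ac assume "ac \<in> basis d S \<times> basis d T"
    then obtain a c where ac: "ac = (a,c)" "a \<in> basis d S" "c \<in> basis d T" by auto
    show "(restrict ((\<lambda>(a,c). merge S a c) ac) S, restrict ((\<lambda>(a,c). merge S a c) ac) T) = ac"
      using ac assms unfolding basis_def merge_def
      by (auto simp: fun_eq_iff PiE_def extensional_def restrict_def)
    show "(\<lambda>(a,c). merge S a c) ac \<in> basis d (S \<union> T)" using ac merge_in_basis by auto
    show "F ((\<lambda>(a,c). merge S a c) ac) = (case ac of (a, c) \<Rightarrow> F (merge S a c))" using ac by simp
  next
    fix x assume x: "x \<in> basis d (S \<union> T)"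
    show "(\<lambda>(a,c). merge S a c) (restrict x S, restrict x T) = x"
      using x unfolding basis_def merge_def
      by (auto simp: fun_eq_iff PiE_def extensional_def restrict_def)
    show "(restrict x S, restrict x T) \<in> basis d S \<times> basis d T"
      using x unfolding basis_def by (auto simp: PiE_def Pi_def)
  qed
  finally show ?thesis by simp
qed

lemma split_one:
  assumes "k \<notin> S"
  shows "(\<Sum>x\<in>basis d (insert k S). F x) = (\<Sum>\<beta><d. \<Sum>c\<in>basis d S. F (c(k:=\<beta>)))"
proof -
  have "basis d (insert k S) = (\<lambda>(y, g). g(k := y)) ` ({..<d} \<times> basis d S)"
    unfolding basis_def by (rule PiE_insert_eq)
  moreover have "inj_on (\<lambda>(y, g). g(k := y)) ({..<d} \<times> basis d S)"
    unfolding basis_def using inj_combinator[OF assms, of "\<lambda>_. {..<d}"] by simp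
  ultimately have "(\<Sum>x\<in>basis d (insert k S). F x) = (\<Sum>(y,g)\<in>{..<d} \<times> basis d S. F (g(k:=y)))"
    by (simp add: sum.reindex case_prod_unfold)
  also have "\<dots> = (\<Sum>\<beta><d. \<Sum>c\<in>basis d S. F (c(k:=\<beta>)))"
    by (rule sum.cartesian_product[symmetric])
  finally show ?thesis .
qed

lemma basis_upd: "a \<in> basis d S \<Longrightarrow> k \<in> S \<Longrightarrow> \<beta> < d \<Longrightarrow> a(k:=\<beta>) \<in> basis d S"
  unfolding basis_def by (auto simp: PiE_def extensional_def Pi_def)

lemma basis_upd_ins: "a \<in> basis d S \<Longrightarrow> \<beta> < d \<Longrightarrow> a(k:=\<beta>) \<in> basis d (insert k S)"
  unfolding basis_def by (auto simp: PiE_def extensional_def Pi_def)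

lemma fiber_sum:
  assumes "k \<in> S"
  shows "(\<Sum>a\<in>basis d S. \<Sum>\<beta><d. F (a(k:=\<beta>))) = of_nat d * (\<Sum>a\<in>basis d S. F a)"
proof -
  have S: "S = insert k (S - {k})" using assms by auto
  have "(\<Sum>a\<in>basis d S. \<Sum>\<beta><d. F (a(k:=\<beta>))) = (\<Sum>\<gamma><d. \<Sum>c\<in>basis d (S-{k}). \<Sum>\<beta><d. F ((c(k:=\<gamma>))(k:=\<beta>)))"
    by (subst S, subst split_one) auto
  also have "\<dots> = (\<Sum>\<gamma><d. \<Sum>c\<in>basis d (S-{k}). \<Sum>\<beta><d. F (c(k:=\<beta>)))" by simp
  also have "\<dots> = of_nat d * (\<Sum>c\<in>basis d (S-{k}). \<Sum>\<beta><d. F (c(k:=\<beta>)))" by simp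
  also have "(\<Sum>c\<in>basis d (S-{k}). \<Sum>\<beta><d. F (c(k:=\<beta>))) = (\<Sum>a\<in>basis d S. F a)"
    by (subst S, subst split_one) (auto intro: sum.swap)
  finally show ?thesis .
qed

lemma collapse:
  assumes "finite T" "restrict h T \<in> basis d T"
  shows "(\<Sum>c\<in>basis d T. if (\<forall>k\<in>T. c k = h k) then F c else 0) = F (restrict h T)"
proof -
  have "\<And>c. c \<in> basis d T \<Longrightarrow> (\<forall>k\<in>T. c k = h k) \<longleftrightarrow> c = restrict h T"
    unfolding basis_def by (auto simp: fun_eq_iff PiE_def extensional_def)
  then have "(\<Sum>c\<in>basis d T. if (\<forall>k\<in>T. c k = h k) then F c else 0)
      = (\<Sum>c\<in>basis d T. if c = restrict h T then F c else 0)" by (intro sum.cong) auto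
  also have "\<dots> = F (restrict h T)" using assms sum.delta'[of "basis d T" "restrict h T" F]
    by simp
  finally show ?thesis .
qed

lemma card_basis: "finite S \<Longrightarrow> card (basis d S) = d ^ card S"
  unfolding basis_def by (simp add: card_PiE)

definition qf :: "'a set \<Rightarrow> ('a \<Rightarrow> 'a \<Rightarrow> complex) \<Rightarrow> ('a \<Rightarrow> complex) \<Rightarrow> complex" where
  "qf I X v = (\<Sum>x\<in>I. \<Sum>y\<in>I. cnj (v x) * X x y * v y)"

lemma qf_insert:
  assumes "finite I" "p \<notin> I"
  shows "qf (insert p I) X w = cnj (w p) * X p p * w p + cnj (w p) * (\<Sum>y\<in>I. X p y * w y)
     + (\<Sum>x\<in>I. cnj (w x) * X x p) * w p + qf I X w"
  using assms unfolding qf_def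
  by (simp add: sum.insert sum.distrib sum_distrib_left sum_distrib_right algebra_simps)

lemma qf_cong: "(\<And>x. x \<in> I \<Longrightarrow> v x = w x) \<Longrightarrow> qf I X v = qf I X w"
  unfolding qf_def by (intro sum.cong) auto

lemma sum_two:
  assumes "finite I" "x \<in> I" "y \<in> I" "x \<noteq> y" "\<And>a. a \<in> I \<Longrightarrow> a \<noteq> x \<Longrightarrow> a \<noteq> y \<Longrightarrow> f a = 0"
  shows "sum f I = f x + f y"
proof -
  have "sum f I = sum f {x,y}"
    using assms by (intro sum.mono_neutral_right) auto
  then show ?thesis using assms by simp
qed

lemma qf_two:
  assumes "finite I" "x \<in> I" "y \<in> I" "x \<noteq> y"
  shows "qf I X (\<lambda>a. if a = x then p else if a = y then q else 0) =
     cnj p * X x x * p + cnj p * X x y * q + cnj q * X y x * p + cnj q * X y y * q"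
proof -
  let ?v = "\<lambda>a. if a = x then p else if a = y then q else 0"
  have "\<And>a. (\<Sum>b\<in>I. cnj (?v a) * X a b * ?v b) = cnj (?v a) * X a x * p + cnj (?v a) * X a y * q"
    using assms by (subst sum_two[of I x y]) auto
  then have "qf I X ?v = (\<Sum>a\<in>I. cnj (?v a) * X a x * p + cnj (?v a) * X a y * q)"
    unfolding qf_def by simp
  also have "\<dots> = (cnj p * X x x * p + cnj p * X x y * q) + (cnj q * X y x * p + cnj q * X y y * q)"
    using assms by (subst sum_two[of I x y]) auto
  finally show ?thesis by simp
qed

lemma sum_one:
  assumes "finite I" "x \<in> I" "\<And>a. a \<in> I \<Longrightarrow> a \<noteq> x \<Longrightarrow> f a = 0"
  shows "sum f I = f x"
proof -
  have "sum f I = sum f {x}"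
    using assms by (intro sum.mono_neutral_right) auto
  then show ?thesis by simp
qed

lemma qf_one:
  assumes "finite I" "x \<in> I"
  shows "qf I X (\<lambda>a. if a = x then 1 else 0) = X x x"
proof -
  have "\<And>a. (\<Sum>b\<in>I. cnj (if a = x then 1 else 0) * X a b * (if b = x then 1 else 0)) = cnj (if a = x then 1 else 0) * X a x"
    using assms by (subst sum_one[of I x]) auto
  then have "qf I X (\<lambda>a. if a = x then 1 else 0) = (\<Sum>a\<in>I. cnj (if a = x then 1 else 0) * X a x)"
    unfolding qf_def by simp
  also have "\<dots> = X x x" using assms by (subst sum_one[of I x]) auto
  finally show ?thesis .
qed

lemma psd_herm:
  assumes "finite I" "\<forall>v. 0 \<le> qf I X v" "x \<in> I" "y \<in> I"
  shows "X x y = cnj (X y x)"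
proof (cases "x = y")
  case True
  have "0 \<le> X x x" using assms(2) qf_one[OF assms(1,3), of X] by metis
  then show ?thesis using True by (simp add: less_eq_complex_def complex_eq_iff)
next
  case False
  have a: "0 \<le> X x x" using assms(2) qf_one[OF assms(1,3), of X] by metis
  have b: "0 \<le> X y y" using assms(2) qf_one[OF assms(1,4), of X] by metis
  have c1: "0 \<le> X x x + X x y + X y x + X y y"
    using assms(2)[rule_format, of "\<lambda>a. if a = x then 1 else if a = y then 1 else 0"] qf_two[OF assms(1,3,4) False, of X 1 1] by simp
  have c2: "0 \<le> X x x + X x y * \<i> - \<i> * X y x + X y y"
    using assms(2)[rule_format, of "\<lambda>a. if a = x then 1 else if a = y then \<i> else 0"] qf_two[OF assms(1,3,4) False, of X 1 \<i>] by (simp add: algebra_simps)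
  have "Im (X x x) = 0" "Im (X y y) = 0" using a b by (auto simp: less_eq_complex_def)
  moreover have "Im (X x x) + Im (X x y) + Im (X y x) + Im (X y y) = 0"
    using c1 by (simp add: less_eq_complex_def)
  moreover have "Im (X x x) + Re (X x y) - Re (X y x) + Im (X y y) = 0"
    using c2 by (simp add: less_eq_complex_def)
  ultimately show ?thesis by (simp add: complex_eq_iff)
qed

lemma psd_zero_row:
  assumes "finite I" "\<forall>v. 0 \<le> qf I X v" "p \<in> I" "y \<in> I" "X p p = 0"
  shows "X p y = 0"
proof (rule ccontr)
  assume ne: "X p y \<noteq> 0"
  then have py: "p \<noteq> y" using assms by auto
  define t :: real where "t = (Re (X y y) + 1) / (2 * (cmod (X p y))^2)"
  have tpos: "t > 0"
  proof -
    have "0 \<le> X y y" using assms(2) qf_one[OF assms(1,4), of X] by metis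
    then have "Re (X y y) \<ge> 0" by (simp add: less_eq_complex_def)
    then show ?thesis using ne unfolding t_def by (intro divide_pos_pos) auto
  qed
  let ?l = "- complex_of_real t * X p y"
  have h: "X y p = cnj (X p y)" using psd_herm[OF assms(1,2,4,3)] .
  have "0 \<le> qf I X (\<lambda>a. if a = p then ?l else if a = y then 1 else 0)" using assms(2) by blast
  also have "\<dots> = cnj ?l * X p y + X y p * ?l + X y y"
    using qf_two[OF assms(1,3,4) py, of X ?l 1] assms(5) by simp
  also have "\<dots> = complex_of_real (- 2 * t * (cmod (X p y))^2) + X y y"
  proof -
    have e: "cnj (X p y) * X p y = complex_of_real ((cmod (X p y))^2)"
      by (metis complex_norm_square mult.commute of_real_power)
    have "cnj ?l * X p y + X y p * ?l = - 2 * complex_of_real t * (cnj (X p y) * X p y)"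
      using h by (simp add: algebra_simps)
    then show ?thesis using e by simp
  qed
  finally have "0 \<le> - 2 * t * (cmod (X p y))^2 + Re (X y y)" by (simp add: less_eq_complex_def)
  moreover have "2 * t * (cmod (X p y))^2 = Re (X y y) + 1" unfolding t_def using ne by simp
  ultimately show False by simp
qed

lemma psd_restrict:
  assumes "finite I" "p \<notin> I" "\<forall>v. 0 \<le> qf (insert p I) X v"
  shows "\<forall>v. 0 \<le> qf I X v"
proof
  fix v
  have "qf (insert p I) X (v(p:=0)) = qf I X (v(p:=0))"
    using qf_insert[OF assms(1,2)] by simp
  also have "\<dots> = qf I X v" using assms(2) by (intro qf_cong) auto
  finally show "0 \<le> qf I X v" using assms(3)[rule_format, of "v(p:=0)"] by simp
qed

lemma psd_decomp:
  fixes X :: "'a \<Rightarrow> 'a \<Rightarrow> complex"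
  assumes "finite I" "\<forall>v. 0 \<le> qf I X v"
  shows "\<exists>(r::nat) u. \<forall>x\<in>I. \<forall>y\<in>I. X x y = (\<Sum>k<r. u k x * cnj (u k y))"
  using assms
proof (induction I arbitrary: X rule: finite_induct)
  case empty
  then show ?case by auto
next
  case (insert p I)
  note fin = insert.hyps(1) and pI = insert.hyps(2)
  have psd: "\<forall>v. 0 \<le> qf (insert p I) X v" by fact
  have herm: "\<And>x y. x \<in> insert p I \<Longrightarrow> y \<in> insert p I \<Longrightarrow> X x y = cnj (X y x)"
    by (rule psd_herm[OF _ psd]) (use fin in auto)
  have Xpp: "0 \<le> X p p" using psd[rule_format, of "\<lambda>a. if a = p then 1 else 0"] qf_one[of "insert p I" p X] fin by simp
  show ?case
  proof (cases "X p p = 0")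
    case True
    have row: "\<And>y. y \<in> insert p I \<Longrightarrow> X p y = 0"
      using psd_zero_row[OF _ psd _ _ True] fin by auto
    have col: "\<And>y. y \<in> insert p I \<Longrightarrow> X y p = 0"
    proof -
      fix y assume y: "y \<in> insert p I"
      have "X y p = cnj (X p y)" using herm[OF y insertI1] .
      then show "X y p = 0" using row[OF y] by simp
    qed
    obtain r :: nat and u :: "nat \<Rightarrow> 'a \<Rightarrow> complex" where ru: "\<forall>x\<in>I. \<forall>y\<in>I. X x y = (\<Sum>k<r. u k x * cnj (u k y))"
      using insert.IH[OF psd_restrict[OF fin pI psd]] by blast
    show ?thesis
    proof (intro exI ballI)
      fix x y assume x: "x \<in> insert p I" and y: "y \<in> insert p I"
      show "X x y = (\<Sum>k<r. (\<lambda>k. (u k)(p:=0)) k x * cnj ((\<lambda>k. (u k)(p:=0)) k y))"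
      proof (cases "x = p \<or> y = p")
        case True
        then show ?thesis using row col x y by auto
      next
        case False
        then show ?thesis using ru x y by auto
      qed
    qed
  next
    case False
    define cr where "cr = Re (X p p)"
    have cr: "X p p = complex_of_real cr" "cr > 0"
      using Xpp False unfolding cr_def by (auto simp: complex_eq_iff less_eq_complex_def)
    define sc where "sc = sqrt cr"
    have sc: "sc > 0" "sc * sc = cr" using cr unfolding sc_def by auto
    define u0 where "u0 = (\<lambda>x. X x p / complex_of_real sc)"
    define X' where "X' = (\<lambda>x y. X x y - u0 x * cnj (u0 y))"
    have scc: "complex_of_real sc * complex_of_real sc = X p p" using sc cr by (simp flip: of_real_mult)
    have psd': "\<forall>v. 0 \<le> qf I X' v"
    proof
      fix v
      define s where "s = (\<Sum>y\<in>I. X p y * v y)"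
      define \<mu> where "\<mu> = - s / X p p"
      have cs: "(\<Sum>x\<in>I. cnj (v x) * X x p) = cnj s"
      proof -
        have "\<And>x. x \<in> I \<Longrightarrow> cnj (v x) * X x p = cnj (X p x * v x)"
        proof -
          fix x assume x: "x \<in> I"
          have "X x p = cnj (X p x)" using herm[of x p] x by simp
          then show "cnj (v x) * X x p = cnj (X p x * v x)" by (simp add: mult.commute)
        qed
        then have "(\<Sum>x\<in>I. cnj (v x) * X x p) = (\<Sum>x\<in>I. cnj (X p x * v x))" by (rule sum.cong[OF refl])
        also have "\<dots> = cnj s" unfolding s_def by (simp add: cnj_sum)
        finally show ?thesis .
      qed
      have "qf (insert p I) X (v(p:=\<mu>)) = cnj \<mu> * X p p * \<mu> + cnj \<mu> * s + cnj s * \<mu> + qf I X v"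
      proof -
        have "qf (insert p I) X (v(p:=\<mu>)) = cnj \<mu> * X p p * \<mu> + cnj \<mu> * (\<Sum>y\<in>I. X p y * (v(p:=\<mu>)) y)
          + (\<Sum>x\<in>I. cnj ((v(p:=\<mu>)) x) * X x p) * \<mu> + qf I X (v(p:=\<mu>))"
          using qf_insert[OF fin pI] by simp
        moreover have "(\<Sum>y\<in>I. X p y * (v(p:=\<mu>)) y) = s" unfolding s_def using pI by (intro sum.cong) auto
        moreover have "(\<Sum>x\<in>I. cnj ((v(p:=\<mu>)) x) * X x p) = cnj s" unfolding cs[symmetric] using pI
          by (intro sum.cong) auto
        moreover have "qf I X (v(p:=\<mu>)) = qf I X v" using pI by (intro qf_cong) auto
        ultimately show ?thesis by simp
      qed
      also have "\<dots> = qf I X v - cnj s * s / X p p"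
      proof -
        have c0: "complex_of_real cr \<noteq> 0" using cr by simp
        have cm: "cnj \<mu> = - cnj s / complex_of_real cr" unfolding \<mu>_def cr(1) by simp
        have "cnj \<mu> * X p p * \<mu> + cnj \<mu> * s + cnj s * \<mu> = - cnj s * s / complex_of_real cr"
          unfolding cm unfolding \<mu>_def cr(1) using c0 by (simp add: field_simps)
        then show ?thesis unfolding cr(1) by simp
      qed
      finally have A: "qf (insert p I) X (v(p:=\<mu>)) = qf I X v - cnj s * s / X p p" .
      have "qf I X' v = qf I X v - (\<Sum>x\<in>I. \<Sum>y\<in>I. cnj (v x) * (u0 x * cnj (u0 y)) * v y)"
        unfolding qf_def X'_def by (simp add: right_diff_distrib left_diff_distrib sum_subtractf)
      also have "(\<Sum>x\<in>I. \<Sum>y\<in>I. cnj (v x) * (u0 x * cnj (u0 y)) * v y)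
          = (\<Sum>x\<in>I. cnj (v x) * X x p) * (\<Sum>y\<in>I. cnj (X y p) * v y) / (complex_of_real sc * complex_of_real sc)"
      proof -
        have "\<And>x y. cnj (v x) * (u0 x * cnj (u0 y)) * v y = (cnj (v x) * X x p) * (cnj (X y p) * v y) / (complex_of_real sc * complex_of_real sc)"
          unfolding u0_def by simp
        then have "(\<Sum>x\<in>I. \<Sum>y\<in>I. cnj (v x) * (u0 x * cnj (u0 y)) * v y) = (\<Sum>x\<in>I. \<Sum>y\<in>I. (cnj (v x) * X x p) * (cnj (X y p) * v y)) / (complex_of_real sc * complex_of_real sc)"
          by (simp add: sum_divide_distrib)
        also have "(\<Sum>x\<in>I. \<Sum>y\<in>I. (cnj (v x) * X x p) * (cnj (X y p) * v y)) = (\<Sum>x\<in>I. cnj (v x) * X x p) * (\<Sum>y\<in>I. cnj (X y p) * v y)"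
          by (rule sum_product[symmetric])
        finally show ?thesis .
      qed
      also have "(\<Sum>y\<in>I. cnj (X y p) * v y) = s" unfolding s_def
      proof (intro sum.cong refl)
        fix y assume y: "y \<in> I"
        have "X p y = cnj (X y p)" using herm[of p y] y by simp
        then show "cnj (X y p) * v y = X p y * v y" by simp
      qed
      finally have "qf I X' v = qf I X v - cnj s * s / X p p" using cs scc by simp
      then show "0 \<le> qf I X' v" using A psd[rule_format, of "v(p:=\<mu>)"] by simp
    qed
    obtain r :: nat and u :: "nat \<Rightarrow> 'a \<Rightarrow> complex" where ru: "\<forall>x\<in>I. \<forall>y\<in>I. X' x y = (\<Sum>k<r. u k x * cnj (u k y))"
      using insert.IH[OF psd'] by blast
    define u' where "u' = (\<lambda>k. if k < r then (u k)(p:=0) else u0)"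
    show ?thesis
    proof (intro exI ballI)
      fix x y assume x: "x \<in> insert p I" and y: "y \<in> insert p I"
      have sumr: "(\<Sum>k<Suc r. u' k x * cnj (u' k y)) = (\<Sum>k<r. ((u k)(p:=0)) x * cnj (((u k)(p:=0)) y)) + u0 x * cnj (u0 y)"
        unfolding u'_def by simp
      show "X x y = (\<Sum>k<Suc r. u' k x * cnj (u' k y))"
      proof (cases "x = p \<or> y = p")
        case True
        have c0: "complex_of_real sc \<noteq> 0" using sc by simp
        have crsc: "cr / sc = sc" using sc by (simp add: field_simps)
        have u0p: "u0 p = complex_of_real sc" unfolding u0_def cr(1)
          by (simp only: of_real_divide[symmetric] crsc)
        have "X x y = u0 x * cnj (u0 y)"
        proof (cases "x = p")
          case True
          have hy: "X p y = cnj (X y p)" using herm[of p y] y by simp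
          have "cnj (u0 y) = cnj (X y p) / complex_of_real sc" unfolding u0_def by simp
          then have "u0 p * cnj (u0 y) = cnj (X y p)" using u0p c0 by simp
          then show ?thesis using hy True by simp
        next
          case False
          then have yp: "y = p" using \<open>x = p \<or> y = p\<close> by simp
          have "u0 x * cnj (u0 p) = X x p" unfolding u0p unfolding u0_def using c0 by simp
          then show ?thesis using yp by simp
        qed
        moreover have "(\<Sum>k<r. ((u k)(p:=0)) x * cnj (((u k)(p:=0)) y)) = 0"
          using True by auto
        ultimately show ?thesis using sumr by simp
      next
        case False
        then have xI: "x \<in> I" "y \<in> I" using x y by auto
        have e: "X' x y = (\<Sum>k<r. u k x * cnj (u k y))" using ru xI by blast
        have "(\<Sum>k<r. ((u k)(p:=0)) x * cnj (((u k)(p:=0)) y)) = (\<Sum>k<r. u k x * cnj (u k y))" using False by simp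
        then show ?thesis using sumr e unfolding X'_def by (simp add: algebra_simps)
      qed
    qed
  qed
qed

lemma iso:
  fixes W :: "nat \<Rightarrow> nat \<Rightarrow> complex" and y :: "nat \<Rightarrow> complex"
  assumes "\<forall>e<d. \<forall>e'<d. (\<Sum>\<gamma><d. cnj (W \<gamma> e) * W \<gamma> e') = (if e = e' then 1 else 0)"
  shows "(\<Sum>\<gamma><d. cnj (\<Sum>e<d. W \<gamma> e * y e) * (\<Sum>e<d. W \<gamma> e * y e)) = (\<Sum>e<d. cnj (y e) * y e)"
proof -
  have "(\<Sum>\<gamma><d. cnj (\<Sum>e<d. W \<gamma> e * y e) * (\<Sum>e<d. W \<gamma> e * y e))
      = (\<Sum>\<gamma><d. \<Sum>e<d. \<Sum>e'<d. (cnj (y e) * y e') * (cnj (W \<gamma> e) * W \<gamma> e'))"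
    apply (simp add: cnj_sum sum_product algebra_simps)
    apply (rule sum.cong[OF refl])
    apply (rule sum.swap)
    done
  also have "\<dots> = (\<Sum>e<d. \<Sum>e'<d. (cnj (y e) * y e') * (\<Sum>\<gamma><d. cnj (W \<gamma> e) * W \<gamma> e'))"
  proof -
    have "(\<Sum>\<gamma><d. \<Sum>e<d. \<Sum>e'<d. (cnj (y e) * y e') * (cnj (W \<gamma> e) * W \<gamma> e'))
        = (\<Sum>e<d. \<Sum>\<gamma><d. \<Sum>e'<d. (cnj (y e) * y e') * (cnj (W \<gamma> e) * W \<gamma> e'))"
      by (rule sum.swap)
    also have "\<dots> = (\<Sum>e<d. \<Sum>e'<d. \<Sum>\<gamma><d. (cnj (y e) * y e') * (cnj (W \<gamma> e) * W \<gamma> e'))"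
      by (rule sum.cong[OF refl], rule sum.swap)
    finally show ?thesis by (simp add: sum_distrib_left)
  qed
  also have "\<dots> = (\<Sum>e<d. \<Sum>e'<d. (cnj (y e) * y e') * (if e = e' then 1 else 0))"
    using assms by (intro sum.cong refl) simp
  also have "\<dots> = (\<Sum>e<d. cnj (y e) * y e)"
    by (simp add: if_distrib cong: if_cong)
  finally show ?thesis .
qed

lemma cnj_mult_self: "cnj z * z = complex_of_real ((cmod z)^2)"
  by (metis complex_norm_square mult.commute of_real_power)

lemma sum_cnj_self: "(\<Sum>x\<in>A. cnj (f x) * f x) = complex_of_real (\<Sum>x\<in>A. (cmod (f x))^2)"
  by (simp add: cnj_mult_self)

lemma re_ineq: "2 * Re (cnj p * q) \<le> (cmod p)^2 + (cmod q)^2"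
proof -
  have "0 \<le> (cmod (p - q))^2" by simp
  also have "(cmod (p - q))^2 = (cmod p)^2 + (cmod q)^2 - 2 * Re (cnj p * q)"
    by (simp only: cmod_power2) (simp add: power2_eq_square algebra_simps)
  finally show ?thesis by simp
qed

lemma re_ineq_sum: "2 * Re (\<Sum>x\<in>A. cnj (P x) * Q x) \<le> (\<Sum>x\<in>A. (cmod (P x))^2) + (\<Sum>x\<in>A. (cmod (Q x))^2)"
proof -
  have "2 * Re (\<Sum>x\<in>A. cnj (P x) * Q x) = (\<Sum>x\<in>A. 2 * Re (cnj (P x) * Q x))"
    by (simp add: Re_sum sum_distrib_left)
  also have "\<dots> \<le> (\<Sum>x\<in>A. (cmod (P x))^2 + (cmod (Q x))^2)"
    by (intro sum_mono re_ineq)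
  finally show ?thesis by (simp add: sum.distrib)
qed

lemma norm_diff_expand:
  fixes g z :: complex and l :: real
  shows "(cmod (g - of_real l * z))^2 = (cmod g)^2 - 2 * l * Re (cnj z * g) + l^2 * (cmod z)^2"
  by (simp only: cmod_power2) (simp add: power2_eq_square algebra_simps)

definition unit_mat :: "nat \<Rightarrow> (nat \<Rightarrow> nat \<Rightarrow> complex) \<Rightarrow> bool" where
  "unit_mat d U \<longleftrightarrow> (\<forall>\<alpha><d. \<forall>\<alpha>'<d. (\<Sum>e<d. U \<alpha> e * cnj (U \<alpha>' e)) = (if \<alpha> = \<alpha>' then 1 else 0)) \<and>
      (\<forall>e<d. \<forall>e'<d. (\<Sum>\<gamma><d. cnj (U \<gamma> e) * U \<gamma> e') = (if e = e' then 1 else 0))"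

definition Yv :: "nat \<Rightarrow> (nat \<Rightarrow> nat \<Rightarrow> nat \<Rightarrow> complex) \<Rightarrow> (cfg \<Rightarrow> nat \<Rightarrow> complex) \<Rightarrow> nat \<Rightarrow> cfg \<Rightarrow> complex" where
  "Yv d Uf z j a = (\<Sum>\<alpha><d. \<Sum>e<d. Uf j \<alpha> e * z (a(j:=\<alpha>)) e)"

lemma Yv_upd[simp]: "Yv d Uf z j (a(j:=\<beta>)) = Yv d Uf z j a"
  by (simp add: Yv_def)

lemma unit_row:
  assumes "unit_mat d U" "\<alpha> < d"
  shows "(\<Sum>e<d. (cmod (U \<alpha> e))^2) = 1"
proof -
  have "(\<Sum>e<d. U \<alpha> e * cnj (U \<alpha> e)) = 1" using assms unfolding unit_mat_def by auto
  moreover have "\<And>e. U \<alpha> e * cnj (U \<alpha> e) = complex_of_real ((cmod (U \<alpha> e))^2)"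
    by (metis cnj_mult_self mult.commute)
  ultimately have "complex_of_real (\<Sum>e<d. (cmod (U \<alpha> e))^2) = 1"
    by (simp only: of_real_sum)
  then show ?thesis by (simp only: of_real_eq_1_iff)
qed

lemma unit_rowc:
  assumes "unit_mat d U"
  shows "\<forall>\<alpha><d. \<forall>\<alpha>'<d. (\<Sum>e<d. cnj (U \<alpha> e) * U \<alpha>' e) = (if \<alpha> = \<alpha>' then 1 else 0)"
proof (intro allI impI)
  fix \<alpha> \<alpha>' assume "\<alpha> < d" "\<alpha>' < d"
  then have "(\<Sum>e<d. U \<alpha> e * cnj (U \<alpha>' e)) = (if \<alpha> = \<alpha>' then 1 else 0)"
    using assms unfolding unit_mat_def by auto
  then have "cnj (\<Sum>e<d. U \<alpha> e * cnj (U \<alpha>' e)) = (if \<alpha> = \<alpha>' then 1 else 0)" by simp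
  then show "(\<Sum>e<d. cnj (U \<alpha> e) * U \<alpha>' e) = (if \<alpha> = \<alpha>' then 1 else 0)"
    by (simp add: cnj_sum)
qed

lemma unit_colc:
  assumes "unit_mat d U"
  shows "\<forall>e<d. \<forall>e'<d. (\<Sum>\<gamma><d. cnj (cnj (U \<gamma> e)) * cnj (U \<gamma> e')) = (if e = e' then 1 else 0)"
proof (intro allI impI)
  fix e e' assume "e < d" "e' < d"
  then have "(\<Sum>\<gamma><d. cnj (U \<gamma> e) * U \<gamma> e') = (if e = e' then 1 else 0)"
    using assms unfolding unit_mat_def by auto
  then have "cnj (\<Sum>\<gamma><d. cnj (U \<gamma> e) * U \<gamma> e') = (if e = e' then 1 else 0)" by simp
  then show "(\<Sum>\<gamma><d. cnj (cnj (U \<gamma> e)) * cnj (U \<gamma> e')) = (if e = e' then 1 else 0)"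
    by (simp add: cnj_sum)
qed

lemma U2:
  assumes "unit_mat d Uj" "unit_mat d Uk"
  shows "(\<Sum>\<gamma><d. (cmod (\<Sum>\<alpha><d. (\<Sum>e<d. Uj \<alpha> e * cnj (Uk \<gamma> e)) * x \<alpha>))^2) = (\<Sum>\<alpha><d. (cmod (x \<alpha>))^2)"
proof -
  define y where "y e = (\<Sum>\<alpha><d. Uj \<alpha> e * x \<alpha>)" for e
  have q: "(\<Sum>\<alpha><d. (\<Sum>e<d. Uj \<alpha> e * cnj (Uk \<gamma> e)) * x \<alpha>) = (\<Sum>e<d. cnj (Uk \<gamma> e) * y e)" for \<gamma>
  proof -
    have "(\<Sum>\<alpha><d. (\<Sum>e<d. Uj \<alpha> e * cnj (Uk \<gamma> e)) * x \<alpha>) = (\<Sum>\<alpha><d. \<Sum>e<d. cnj (Uk \<gamma> e) * (Uj \<alpha> e * x \<alpha>))"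
      by (simp add: sum_distrib_left sum_distrib_right mult_ac)
    also have "\<dots> = (\<Sum>e<d. \<Sum>\<alpha><d. cnj (Uk \<gamma> e) * (Uj \<alpha> e * x \<alpha>))" by (rule sum.swap)
    also have "\<dots> = (\<Sum>e<d. cnj (Uk \<gamma> e) * y e)" unfolding y_def by (simp add: sum_distrib_left)
    finally show ?thesis .
  qed
  have "complex_of_real (\<Sum>\<gamma><d. (cmod (\<Sum>e<d. cnj (Uk \<gamma> e) * y e))^2)
      = (\<Sum>\<gamma><d. cnj (\<Sum>e<d. cnj (Uk \<gamma> e) * y e) * (\<Sum>e<d. cnj (Uk \<gamma> e) * y e))"
    by (rule sum_cnj_self[symmetric])
  also have "\<dots> = (\<Sum>e<d. cnj (y e) * y e)"
    by (rule iso[OF unit_colc[OF assms(2)]])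
  also have "\<dots> = (\<Sum>e<d. cnj (\<Sum>\<alpha><d. Uj \<alpha> e * x \<alpha>) * (\<Sum>\<alpha><d. Uj \<alpha> e * x \<alpha>))"
    unfolding y_def ..
  also have "\<dots> = (\<Sum>\<alpha><d. cnj (x \<alpha>) * x \<alpha>)"
    by (rule iso[of d "\<lambda>e \<alpha>. Uj \<alpha> e", OF unit_rowc[OF assms(1)]])
  also have "\<dots> = complex_of_real (\<Sum>\<alpha><d. (cmod (x \<alpha>))^2)" by (rule sum_cnj_self)
  finally have e: "complex_of_real (\<Sum>\<gamma><d. (cmod (\<Sum>e<d. cnj (Uk \<gamma> e) * y e))^2) = complex_of_real (\<Sum>\<alpha><d. (cmod (x \<alpha>))^2)" .
  have "(\<Sum>\<gamma><d. (cmod (\<Sum>e<d. cnj (Uk \<gamma> e) * y e))^2) = (\<Sum>\<alpha><d. (cmod (x \<alpha>))^2)"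
    using e by (simp only: of_real_eq_iff)
  then show ?thesis by (simp only: q)
qed

lemma inner_j:
  assumes "finite S" "j \<in> S" "d > 0"
  shows "(\<Sum>a\<in>basis d S. Yv d Uf z j a * cnj (\<Sum>e<d. Uf j (a j) e * z a e))
       = (\<Sum>a\<in>basis d S. cnj (Yv d Uf z j a) * Yv d Uf z j a) / of_nat d"
proof -
  let ?F = "\<lambda>a. Yv d Uf z j a * cnj (\<Sum>e<d. Uf j (a j) e * z a e)"
  have "of_nat d * (\<Sum>a\<in>basis d S. ?F a) = (\<Sum>a\<in>basis d S. \<Sum>\<alpha><d. ?F (a(j:=\<alpha>)))"
    by (rule fiber_sum[OF assms(2), symmetric])
  also have "\<dots> = (\<Sum>a\<in>basis d S. cnj (Yv d Uf z j a) * Yv d Uf z j a)"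
  proof (rule sum.cong[OF refl])
    fix a
    have "(\<Sum>\<alpha><d. ?F (a(j:=\<alpha>))) = Yv d Uf z j a * cnj (\<Sum>\<alpha><d. \<Sum>e<d. Uf j \<alpha> e * z (a(j:=\<alpha>)) e)"
      by (simp add: sum_distrib_left cnj_sum)
    also have "\<dots> = Yv d Uf z j a * cnj (Yv d Uf z j a)" by (simp only: Yv_def)
    finally show "(\<Sum>\<alpha><d. ?F (a(j:=\<alpha>))) = cnj (Yv d Uf z j a) * Yv d Uf z j a" by (simp add: mult.commute)
  qed
  finally show ?thesis using assms(3) by (simp add: field_simps)
qed

lemma gz:
  "(\<Sum>a\<in>B. \<Sum>e<d. cnj (z a e) * (\<Sum>j\<in>J. cnj (Uf j (a j) e) * Yv d Uf z j a))
   = (\<Sum>j\<in>J. \<Sum>a\<in>B. Yv d Uf z j a * cnj (\<Sum>e<d. Uf j (a j) e * z a e))"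
proof -
  have "(\<Sum>a\<in>B. \<Sum>e<d. cnj (z a e) * (\<Sum>j\<in>J. cnj (Uf j (a j) e) * Yv d Uf z j a))
      = (\<Sum>a\<in>B. \<Sum>e<d. \<Sum>j\<in>J. Yv d Uf z j a * (cnj (Uf j (a j) e) * cnj (z a e)))"
    by (simp add: sum_distrib_left mult_ac)
  also have "\<dots> = (\<Sum>a\<in>B. \<Sum>j\<in>J. \<Sum>e<d. Yv d Uf z j a * (cnj (Uf j (a j) e) * cnj (z a e)))"
    by (rule sum.cong[OF refl], rule sum.swap)
  also have "\<dots> = (\<Sum>j\<in>J. \<Sum>a\<in>B. \<Sum>e<d. Yv d Uf z j a * (cnj (Uf j (a j) e) * cnj (z a e)))"
    by (rule sum.swap)
  also have "\<dots> = (\<Sum>j\<in>J. \<Sum>a\<in>B. Yv d Uf z j a * cnj (\<Sum>e<d. Uf j (a j) e * z a e))"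
    by (simp add: sum_distrib_left cnj_sum)
  finally show ?thesis .
qed

lemma cross:
  assumes "finite S" "j \<in> S" "k \<in> S" "j \<noteq> k" "d > 0" "unit_mat d (Uf j)" "unit_mat d (Uf k)"
  shows "2 * Re (\<Sum>a\<in>basis d S. \<Sum>e<d. cnj (cnj (Uf j (a j) e) * Yv d Uf z j a) * (cnj (Uf k (a k) e) * Yv d Uf z k a))
     \<le> ((\<Sum>a\<in>basis d S. (cmod (Yv d Uf z j a))^2) + (\<Sum>a\<in>basis d S. (cmod (Yv d Uf z k a))^2)) / real d"
proof -
  let ?B = "basis d S"
  let ?Y1 = "Yv d Uf z j" and ?Y2 = "Yv d Uf z k"
  define V where "V \<alpha> \<gamma> = (\<Sum>e<d. Uf j \<alpha> e * cnj (Uf k \<gamma> e))" for \<alpha> \<gamma>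
  define H where "H a = cnj (?Y1 a) * ?Y2 a * V (a j) (a k)" for a
  define C where "C = (\<Sum>a\<in>?B. \<Sum>e<d. cnj (cnj (Uf j (a j) e) * ?Y1 a) * (cnj (Uf k (a k) e) * ?Y2 a))"
  have C: "C = (\<Sum>a\<in>?B. H a)"
    unfolding C_def H_def V_def by (intro sum.cong refl) (simp add: sum_distrib_left mult_ac)
  have "of_nat d * of_nat d * C = of_nat d * (\<Sum>a\<in>?B. \<Sum>\<alpha><d. H (a(j:=\<alpha>)))"
    unfolding C by (simp add: fiber_sum[OF assms(2)])
  also have "\<dots> = (\<Sum>a\<in>?B. \<Sum>\<gamma><d. \<Sum>\<alpha><d. H ((a(k:=\<gamma>))(j:=\<alpha>)))"
    by (rule fiber_sum[OF assms(3), of "\<lambda>a. \<Sum>\<alpha><d. H (a(j:=\<alpha>))", symmetric])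
  also have "\<dots> = (\<Sum>a\<in>?B. \<Sum>\<gamma><d. cnj (?Y1 (a(k:=\<gamma>))) * (\<Sum>\<alpha><d. V \<alpha> \<gamma> * ?Y2 (a(j:=\<alpha>))))"
  proof (intro sum.cong refl)
    fix a \<gamma>
    have "\<And>\<alpha>. H ((a(k:=\<gamma>))(j:=\<alpha>)) = cnj (?Y1 (a(k:=\<gamma>))) * (V \<alpha> \<gamma> * ?Y2 (a(j:=\<alpha>)))"
    proof -
      fix \<alpha>
      have t: "(a(k:=\<gamma>))(j:=\<alpha>) = (a(j:=\<alpha>))(k:=\<gamma>)" using assms(4) by (rule fun_upd_twist[symmetric])
      have "?Y2 ((a(k:=\<gamma>))(j:=\<alpha>)) = ?Y2 (a(j:=\<alpha>))" unfolding t by (rule Yv_upd)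
      moreover have "?Y1 ((a(k:=\<gamma>))(j:=\<alpha>)) = ?Y1 (a(k:=\<gamma>))" by (rule Yv_upd)
      moreover have "((a(k:=\<gamma>))(j:=\<alpha>)) j = \<alpha>" "((a(k:=\<gamma>))(j:=\<alpha>)) k = \<gamma>" using assms(4) by auto
      ultimately show "H ((a(k:=\<gamma>))(j:=\<alpha>)) = cnj (?Y1 (a(k:=\<gamma>))) * (V \<alpha> \<gamma> * ?Y2 (a(j:=\<alpha>)))"
        unfolding H_def by (simp add: mult_ac)
    qed
    then show "(\<Sum>\<alpha><d. H ((a(k:=\<gamma>))(j:=\<alpha>))) = cnj (?Y1 (a(k:=\<gamma>))) * (\<Sum>\<alpha><d. V \<alpha> \<gamma> * ?Y2 (a(j:=\<alpha>)))"
      by (simp add: sum_distrib_left)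
  qed
  finally have dC: "of_nat d * of_nat d * C = (\<Sum>a\<in>?B. \<Sum>\<gamma><d. cnj (?Y1 (a(k:=\<gamma>))) * (\<Sum>\<alpha><d. V \<alpha> \<gamma> * ?Y2 (a(j:=\<alpha>))))" .
  have "2 * Re (of_nat d * of_nat d * C) = (\<Sum>a\<in>?B. 2 * Re (\<Sum>\<gamma><d. cnj (?Y1 (a(k:=\<gamma>))) * (\<Sum>\<alpha><d. V \<alpha> \<gamma> * ?Y2 (a(j:=\<alpha>)))))"
    unfolding dC by (simp add: Re_sum sum_distrib_left)
  also have "\<dots> \<le> (\<Sum>a\<in>?B. (\<Sum>\<gamma><d. (cmod (?Y1 (a(k:=\<gamma>))))^2) + (\<Sum>\<gamma><d. (cmod (\<Sum>\<alpha><d. V \<alpha> \<gamma> * ?Y2 (a(j:=\<alpha>))))^2))"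
    by (intro sum_mono re_ineq_sum)
  also have "\<dots> = (\<Sum>a\<in>?B. (\<Sum>\<gamma><d. (cmod (?Y1 (a(k:=\<gamma>))))^2) + (\<Sum>\<alpha><d. (cmod (?Y2 (a(j:=\<alpha>))))^2))"
    unfolding V_def by (intro sum.cong refl arg_cong2[where f="(+)"] U2 assms(6,7))
  also have "\<dots> = real d * (\<Sum>a\<in>?B. (cmod (?Y1 a))^2) + real d * (\<Sum>a\<in>?B. (cmod (?Y2 a))^2)"
    using fiber_sum[OF assms(3), of "\<lambda>a. (cmod (?Y1 a))^2"] fiber_sum[OF assms(2), of "\<lambda>a. (cmod (?Y2 a))^2"]
    by (simp add: sum.distrib)
  finally have "2 * (real d * real d * Re C) \<le> real d * ((\<Sum>a\<in>?B. (cmod (?Y1 a))^2) + (\<Sum>a\<in>?B. (cmod (?Y2 a))^2))"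
    by (simp add: algebra_simps)
  then have "real d * (2 * (real d * Re C)) \<le> real d * ((\<Sum>a\<in>?B. (cmod (?Y1 a))^2) + (\<Sum>a\<in>?B. (cmod (?Y2 a))^2))"
    by (simp add: algebra_simps)
  then have "2 * (real d * Re C) \<le> ((\<Sum>a\<in>?B. (cmod (?Y1 a))^2) + (\<Sum>a\<in>?B. (cmod (?Y2 a))^2))"
    using assms(5) by (simp add: mult_le_cancel_left_pos)
  then show ?thesis unfolding C_def[symmetric] using assms(5) by (simp add: field_simps)
qed

lemma pair_sum:
  fixes x :: "nat \<Rightarrow> real"
  assumes "finite J"
  shows "(\<Sum>j\<in>J. \<Sum>k\<in>J-{j}. x j + x k) = 2 * (real (card J) - 1) * (\<Sum>j\<in>J. x j)"
proof -
  have "(\<Sum>j\<in>J. \<Sum>k\<in>J-{j}. x j + x k) = (\<Sum>j\<in>J. (real (card J) - 1) * x j + ((\<Sum>k\<in>J. x k) - x j))"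
  proof (rule sum.cong[OF refl])
    fix j assume j: "j \<in> J"
    have "(\<Sum>k\<in>J-{j}. x j + x k) = real (card (J - {j})) * x j + (\<Sum>k\<in>J-{j}. x k)"
      by (simp add: sum.distrib)
    also have "real (card (J - {j})) = real (card J) - 1"
    proof -
      have "card J \<ge> 1" using j assms by (metis card_0_eq empty_iff less_one not_le)
      then show ?thesis using j assms by (simp add: card_Diff_singleton of_nat_diff)
    qed
    also have "(\<Sum>k\<in>J-{j}. x k) = (\<Sum>k\<in>J. x k) - x j" using j assms by (simp add: sum_diff1)
    finally show "(\<Sum>k\<in>J-{j}. x j + x k) = (real (card J) - 1) * x j + ((\<Sum>k\<in>J. x k) - x j)" .
  qed
  also have "\<dots> = 2 * (real (card J) - 1) * (\<Sum>j\<in>J. x j)"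
    by (simp add: sum.distrib sum_subtractf sum_distrib_left sum_distrib_right algebra_simps)
  finally show ?thesis .
qed

lemma VL:
  assumes fin: "finite S" and JS: "J \<subseteq> S" and d: "d > 0" and U: "\<forall>j\<in>J. unit_mat d (Uf j)" and Jne: "J \<noteq> {}"
  shows "(\<Sum>j\<in>J. \<Sum>a\<in>basis d S. (cmod (Yv d Uf z j a))^2)
      \<le> real d * (real (card J) + real d - 1) * (\<Sum>a\<in>basis d S. \<Sum>e<d. (cmod (z a e))^2)"
proof -
  let ?B = "basis d S"
  have finJ: "finite J" using JS fin finite_subset by blast
  define G where "G j a e = cnj (Uf j (a j) e) * Yv d Uf z j a" for j a e
  define g where "g a e = (\<Sum>j\<in>J. G j a e)" for a e
  define Lj where "Lj j = (\<Sum>a\<in>?B. (cmod (Yv d Uf z j a))^2)" for j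
  define L where "L = (\<Sum>j\<in>J. Lj j)"
  define Zr where "Zr = (\<Sum>a\<in>?B. \<Sum>e<d. (cmod (z a e))^2)"
  define Gr where "Gr = (\<Sum>a\<in>?B. \<Sum>e<d. (cmod (g a e))^2)"
  define C where "C j k = (\<Sum>a\<in>?B. \<Sum>e<d. cnj (G j a e) * G k a e)" for j k
  define lam where "lam = real d + real (card J) - 1"
  have "card J \<ge> 1" using Jne finJ by (metis card_0_eq less_one not_le)
  then have lam: "lam > 0" unfolding lam_def using d by simp
  have Ip: "Re (\<Sum>a\<in>?B. \<Sum>e<d. cnj (z a e) * g a e) = L / real d"
  proof -
    have "(\<Sum>a\<in>?B. \<Sum>e<d. cnj (z a e) * g a e) = (\<Sum>j\<in>J. \<Sum>a\<in>?B. Yv d Uf z j a * cnj (\<Sum>e<d. Uf j (a j) e * z a e))"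
      unfolding g_def G_def by (rule gz)
    also have "\<dots> = (\<Sum>j\<in>J. (\<Sum>a\<in>?B. cnj (Yv d Uf z j a) * Yv d Uf z j a) / of_nat d)"
      using JS by (intro sum.cong refl inner_j[OF fin _ d]) auto
    also have "\<dots> = (\<Sum>j\<in>J. complex_of_real (Lj j) / of_nat d)"
      unfolding Lj_def by (simp only: sum_cnj_self)
    finally show ?thesis unfolding L_def by (simp add: Re_sum sum_divide_distrib)
  qed
  have Gr_C: "Gr = Re (\<Sum>j\<in>J. \<Sum>k\<in>J. C j k)"
  proof -
    have "complex_of_real Gr = (\<Sum>a\<in>?B. \<Sum>e<d. cnj (g a e) * g a e)"
      unfolding Gr_def by (simp only: sum_cnj_self of_real_sum)
    also have "\<dots> = (\<Sum>a\<in>?B. \<Sum>e<d. \<Sum>j\<in>J. \<Sum>k\<in>J. cnj (G j a e) * G k a e)"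
      unfolding g_def by (simp add: cnj_sum sum_product)
    also have "\<dots> = (\<Sum>a\<in>?B. \<Sum>j\<in>J. \<Sum>e<d. \<Sum>k\<in>J. cnj (G j a e) * G k a e)"
      by (rule sum.cong[OF refl], rule sum.swap)
    also have "\<dots> = (\<Sum>a\<in>?B. \<Sum>j\<in>J. \<Sum>k\<in>J. \<Sum>e<d. cnj (G j a e) * G k a e)"
      by (rule sum.cong[OF refl], rule sum.cong[OF refl], rule sum.swap)
    also have "\<dots> = (\<Sum>j\<in>J. \<Sum>a\<in>?B. \<Sum>k\<in>J. \<Sum>e<d. cnj (G j a e) * G k a e)"
      by (rule sum.swap)
    also have "\<dots> = (\<Sum>j\<in>J. \<Sum>k\<in>J. \<Sum>a\<in>?B. \<Sum>e<d. cnj (G j a e) * G k a e)"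
      by (rule sum.cong[OF refl], rule sum.swap)
    also have "\<dots> = (\<Sum>j\<in>J. \<Sum>k\<in>J. C j k)" unfolding C_def ..
    finally show ?thesis by (metis Re_complex_of_real)
  qed
  have Cjj: "Re (C j j) = Lj j" if j: "j \<in> J" for j
  proof -
    have "C j j = (\<Sum>a\<in>?B. \<Sum>e<d. complex_of_real ((cmod (Yv d Uf z j a))^2 * (cmod (Uf j (a j) e))^2))"
      unfolding C_def G_def
      by (intro sum.cong refl, subst cnj_mult_self) (simp add: norm_mult power_mult_distrib mult.commute)
    also have "\<dots> = complex_of_real (\<Sum>a\<in>?B. (cmod (Yv d Uf z j a))^2 * (\<Sum>e<d. (cmod (Uf j (a j) e))^2))"
      by (simp add: sum_distrib_left)
    also have "\<dots> = complex_of_real (Lj j)"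
    proof -
      have "\<And>a. a \<in> ?B \<Longrightarrow> (\<Sum>e<d. (cmod (Uf j (a j) e))^2) = 1"
      proof -
        fix a assume "a \<in> ?B"
        then have "a j < d" using j JS unfolding basis_def by (auto simp: PiE_def Pi_def)
        then show "(\<Sum>e<d. (cmod (Uf j (a j) e))^2) = 1" using unit_row U j by blast
      qed
      then show ?thesis unfolding Lj_def by simp
    qed
    finally show ?thesis by simp
  qed
  have Cjk: "2 * Re (C j k) \<le> (Lj j + Lj k) / real d" if "j \<in> J" "k \<in> J" "j \<noteq> k" for j k
    unfolding C_def G_def Lj_def using that JS U by (intro cross[OF fin _ _ _ d]) auto
  have Gr_le: "Gr \<le> L + (real (card J) - 1) * L / real d"
  proof -
    have "Gr = (\<Sum>j\<in>J. Re (C j j) + (\<Sum>k\<in>J-{j}. Re (C j k)))"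
      unfolding Gr_C Re_sum using finJ by (intro sum.cong refl) (simp add: sum.remove)
    also have "\<dots> \<le> (\<Sum>j\<in>J. Lj j + (\<Sum>k\<in>J-{j}. (Lj j + Lj k) / (2 * real d)))"
    proof (rule sum_mono, rule add_mono)
      fix j assume j: "j \<in> J"
      show "Re (C j j) \<le> Lj j" using Cjj[OF j] by simp
      show "(\<Sum>k\<in>J-{j}. Re (C j k)) \<le> (\<Sum>k\<in>J-{j}. (Lj j + Lj k) / (2 * real d))"
      proof (rule sum_mono)
        fix k assume "k \<in> J - {j}"
        then have "2 * Re (C j k) \<le> (Lj j + Lj k) / real d" using Cjk j by auto
        then show "Re (C j k) \<le> (Lj j + Lj k) / (2 * real d)" using d by (simp add: field_simps)
      qed
    qed
    also have "\<dots> = L + (\<Sum>j\<in>J. \<Sum>k\<in>J-{j}. Lj j + Lj k) / (2 * real d)"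
    proof -
      have e: "(\<Sum>j\<in>J. \<Sum>k\<in>J-{j}. Lj j + Lj k) / (2 * real d) = (\<Sum>j\<in>J. \<Sum>k\<in>J-{j}. (Lj j + Lj k) / (2 * real d))"
        by (simp only: sum_divide_distrib)
      show ?thesis unfolding L_def e by (simp only: sum.distrib)
    qed
    also have "\<dots> = L + (real (card J) - 1) * L / real d"
      unfolding pair_sum[OF finJ] L_def using d by (simp add: field_simps)
    finally show ?thesis .
  qed
  have "0 \<le> (\<Sum>a\<in>?B. \<Sum>e<d. (cmod (g a e - of_real lam * z a e))^2)" by (intro sum_nonneg) auto
  also have "\<dots> = Gr - 2 * lam * Re (\<Sum>a\<in>?B. \<Sum>e<d. cnj (z a e) * g a e) + lam^2 * Zr"
  proof -
    define R where "R a e = Re (cnj (z a e) * g a e)" for a e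
    have "(\<Sum>a\<in>?B. \<Sum>e<d. (cmod (g a e - of_real lam * z a e))^2)
        = (\<Sum>a\<in>?B. \<Sum>e<d. (cmod (g a e))^2 - 2 * lam * R a e + lam^2 * (cmod (z a e))^2)"
      unfolding R_def norm_diff_expand ..
    also have "\<dots> = Gr - 2 * lam * (\<Sum>a\<in>?B. \<Sum>e<d. R a e) + lam^2 * Zr"
      unfolding Gr_def Zr_def by (simp only: sum.distrib sum_subtractf sum_distrib_left)
    also have "(\<Sum>a\<in>?B. \<Sum>e<d. R a e) = Re (\<Sum>a\<in>?B. \<Sum>e<d. cnj (z a e) * g a e)"
      unfolding R_def by (simp only: Re_sum)
    finally show ?thesis .
  qed
  finally have "0 \<le> Gr - 2 * lam * (L / real d) + lam^2 * Zr" unfolding Ip .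
  then have "0 \<le> L + (real (card J) - 1) * L / real d - 2 * lam * (L / real d) + lam^2 * Zr"
    using Gr_le by linarith
  moreover have "L + (real (card J) - 1) * L / real d = lam * (L / real d)"
    unfolding lam_def using d by (simp add: field_simps)
  ultimately have "0 \<le> lam * (L / real d) - 2 * lam * (L / real d) + lam^2 * Zr" by simp
  then have "0 \<le> lam * (lam * Zr) - lam * (L / real d)" by (simp add: power2_eq_square algebra_simps)
  then have "lam * (L / real d) \<le> lam * (lam * Zr)" by simp
  then have "L / real d \<le> lam * Zr" using lam by (rule mult_left_le_imp_le)
  then have "L \<le> real d * (lam * Zr)" using d by (simp add: field_simps)
  then show ?thesis unfolding L_def Lj_def Zr_def lam_def by (simp add: mult_ac add_ac)
qed

lemma all_sys_eq: "all_sys N = {1..2*N+2}"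
proof -
  have "sysA' N ` {1..N} = {1..N}" unfolding sysA'_def by simp
  moreover have "sysA N ` {1..N} = {N+1..2*N}" unfolding sysA_def
    by (auto simp: image_iff intro!: bexI[where x="x - N" for x])
  ultimately show ?thesis unfolding all_sys_def sysAt_def sysB_def by auto
qed

lemma alice_sys_eq: "alice_sys N = {N+1..2*N+1}"
proof -
  have "sysA N ` {1..N} = {N+1..2*N}" unfolding sysA_def
    by (auto simp: image_iff intro!: bexI[where x="x - N" for x])
  then show ?thesis unfolding alice_sys_def sysAt_def by auto
qed

lemma AtB_eq: "AtB_sys N = {2*N+1, 2*N+2}" unfolding AtB_sys_def sysAt_def sysB_def by simp

lemma basis_mem: "x \<in> basis d S \<Longrightarrow> k \<in> S \<Longrightarrow> x k < d"
  unfolding basis_def by (auto simp: PiE_def Pi_def)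

lemma basis_out: "x \<in> basis d S \<Longrightarrow> k \<notin> S \<Longrightarrow> x k = undefined"
  unfolding basis_def by (auto simp: PiE_def extensional_def)

lemma basis_eqI:
  assumes "x \<in> basis d S" "y \<in> basis d S" "\<And>k. k \<in> S \<Longrightarrow> x k = y k" shows "x = y"
proof (rule ext)
  fix k show "x k = y k" using basis_out[OF assms(1)] basis_out[OF assms(2)] assms(3) by (cases "k \<in> S") auto
qed

lemma basis_memI: "(\<And>k. k \<in> S \<Longrightarrow> x k < d) \<Longrightarrow> (\<And>k. k \<notin> S \<Longrightarrow> x k = undefined) \<Longrightarrow> x \<in> basis d S"
  unfolding basis_def by (auto simp: PiE_def extensional_def Pi_def)

lemma restrict_basis: "x \<in> basis d U \<Longrightarrow> S \<subseteq> U \<Longrightarrow> restrict x S \<in> basis d S"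
  unfolding basis_def by (auto simp: PiE_def Pi_def)

lemma basis_empty: "basis d {} = {\<lambda>_. undefined}"
  unfolding basis_def by simp

lemma sum_basis_single: "(\<Sum>x\<in>basis d {k}. F x) = (\<Sum>s<d. F ((\<lambda>_. undefined)(k:=s)))"
  using split_one[where k=k and S="{}" and d=d and F=F] by (simp add: basis_empty fun_upd_def)

lemma sum_basis_pair:
  assumes "k1 \<noteq> k2"
  shows "(\<Sum>x\<in>basis d {k1,k2}. F x) = (\<Sum>s<d. \<Sum>e<d. F (((\<lambda>_. undefined)(k2:=e))(k1:=s)))"
  using split_one[where k=k1 and S="{k2}" and d=d and F=F] assms by (simp add: sum_basis_single)

lemma prod_if_const:
  fixes c :: "'a::comm_semiring_1"
  assumes "finite L"
  shows "(\<Prod>l\<in>L. if P l then c else 0) = (if \<forall>l\<in>L. P l then c ^ card L else 0)"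
proof (cases "\<forall>l\<in>L. P l")
  case True
  then show ?thesis by simp
next
  case False
  then obtain l where "l \<in> L" "\<not> P l" by auto
  then have "(\<Prod>l\<in>L. if P l then c else 0) = 0" using assms by (intro prod_zero) auto
  then show ?thesis using False by auto
qed

definition tb :: "nat \<Rightarrow> nat \<Rightarrow> nat \<Rightarrow> cfg" where
  "tb N s e = (\<lambda>k. if k = 2*N+1 then s else if k = 2*N+2 then e else undefined)"

definition gA :: "nat \<Rightarrow> cfg \<Rightarrow> nat \<Rightarrow> cfg" where
  "gA N x s = (\<lambda>k. if k \<in> {N+1..2*N} then x (k - N) else if k = 2*N+1 then s else undefined)"

lemma S1:
  assumes x: "x \<in> basis d (all_sys N)" and y: "y \<in> basis d (all_sys N)"
  shows "mmul d (all_sys N) (op_ext (alice_sys N) Mi (all_sys N)) (Omega d N rho) x y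
   = (if \<forall>l\<in>{1..N}. y l = y (N+l) then (1/of_nat d)^N else 0) *
     (\<Sum>s<d. Mi (restrict x (alice_sys N)) (gA N x s) * rho (tb N s (x (2*N+2))) (restrict y (AtB_sys N)))"
proof -
  define Al where "Al = {N+1..2*N+1}"
  define R where "R = {1..N} \<union> {2*N+2}"
  define Aa where "Aa = {N+1..2*N}"
  define t where "t = 2*N+1"
  define Yc where "Yc = (\<forall>l\<in>{1..N}. y l = y (N+l))"
  define c where "c = (1/of_nat d :: complex)^N"
  define ry where "ry = restrict y (AtB_sys N)"
  define rx where "rx = restrict x Al"
  have alleq: "all_sys N = Al \<union> R" unfolding all_sys_eq Al_def R_def by auto
  have aliceq: "alice_sys N = Al" unfolding alice_sys_eq Al_def ..
  have disj: "Al \<inter> R = {}" unfolding Al_def R_def by auto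
  have diffR: "all_sys N - Al = R" unfolding alleq using disj by auto
  have finR: "finite R" "finite Al" "finite Aa" unfolding R_def Al_def Aa_def by auto
  have xR: "restrict x R \<in> basis d R" using x unfolding alleq by (intro restrict_basis) auto
  have "mmul d (all_sys N) (op_ext (alice_sys N) Mi (all_sys N)) (Omega d N rho) x y
     = (\<Sum>a\<in>basis d Al. \<Sum>cc\<in>basis d R. op_ext Al Mi (all_sys N) x (merge Al a cc) * Omega d N rho (merge Al a cc) y)"
    unfolding mmul_def aliceq by (subst alleq, subst split_basis[OF disj], simp only: alleq)
  also have "\<dots> = (\<Sum>a\<in>basis d Al. Mi rx a * Omega d N rho (merge Al a (restrict x R)) y)"
  proof (rule sum.cong[OF refl])
    fix a assume a: "a \<in> basis d Al"
    have "\<And>cc. cc \<in> basis d R \<Longrightarrow> op_ext Al Mi (all_sys N) x (merge Al a cc) * Omega d N rho (merge Al a cc) y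
        = (if \<forall>k\<in>R. cc k = x k then Mi rx a * Omega d N rho (merge Al a cc) y else 0)"
    proof -
      fix cc assume cc: "cc \<in> basis d R"
      have ra: "restrict (merge Al a cc) Al = a"
        using basis_out[OF a] unfolding merge_def by (auto simp: restrict_def)
      have "(\<forall>k\<in>all_sys N - Al. x k = merge Al a cc k) \<longleftrightarrow> (\<forall>k\<in>R. cc k = x k)"
        unfolding diffR merge_def using disj by auto
      then show "op_ext Al Mi (all_sys N) x (merge Al a cc) * Omega d N rho (merge Al a cc) y
        = (if \<forall>k\<in>R. cc k = x k then Mi rx a * Omega d N rho (merge Al a cc) y else 0)"
        unfolding op_ext_def ra rx_def by simp
    qed
    then have "(\<Sum>cc\<in>basis d R. op_ext Al Mi (all_sys N) x (merge Al a cc) * Omega d N rho (merge Al a cc) y)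
       = (\<Sum>cc\<in>basis d R. if \<forall>k\<in>R. cc k = x k then Mi rx a * Omega d N rho (merge Al a cc) y else 0)"
      by (rule sum.cong[OF refl])
    also have "\<dots> = Mi rx a * Omega d N rho (merge Al a (restrict x R)) y"
      by (rule collapse[OF finR(1) xR])
    finally show "(\<Sum>cc\<in>basis d R. op_ext Al Mi (all_sys N) x (merge Al a cc) * Omega d N rho (merge Al a cc) y)
       = Mi rx a * Omega d N rho (merge Al a (restrict x R)) y" .
  qed
  also have "\<dots> = (\<Sum>a\<in>basis d Al. (if Yc then c else 0) *
        (if \<forall>k\<in>Aa. a k = x (k - N) then Mi rx a * rho (tb N (a t) (x (2*N+2))) ry else 0))"
  proof (rule sum.cong[OF refl])
    fix a assume a: "a \<in> basis d Al"
    let ?w = "merge Al a (restrict x R)"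
    have wl: "?w l = x l" if "l \<in> {1..N}" for l using that unfolding merge_def Al_def R_def by auto
    have wNl: "?w (N+l) = a (N+l)" if "l \<in> {1..N}" for l using that unfolding merge_def Al_def by auto
    have "(\<Prod>l\<in>{1..N}. psi_plus d (sysA' N l) (sysA N l) ?w y)
        = (\<Prod>l\<in>{1..N}. if x l = a (N+l) \<and> y l = y (N+l) then 1 / of_nat d else 0)"
      unfolding psi_plus_def sysA'_def sysA_def using wl wNl by (intro prod.cong refl) auto
    also have "\<dots> = (if \<forall>l\<in>{1..N}. x l = a (N+l) \<and> y l = y (N+l) then c else 0)"
      unfolding c_def by (subst prod_if_const) auto
    finally have P: "(\<Prod>l\<in>{1..N}. psi_plus d (sysA' N l) (sysA N l) ?w y)
        = (if \<forall>l\<in>{1..N}. x l = a (N+l) \<and> y l = y (N+l) then c else 0)" .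
    have rw: "restrict ?w (AtB_sys N) = tb N (a t) (x (2*N+2))"
      unfolding AtB_eq tb_def merge_def Al_def R_def t_def by (auto simp: fun_eq_iff)
    have cond: "(\<forall>l\<in>{1..N}. x l = a (N+l)) \<longleftrightarrow> (\<forall>k\<in>Aa. a k = x (k - N))"
    proof
      assume h: "\<forall>l\<in>{1..N}. x l = a (N+l)"
      show "\<forall>k\<in>Aa. a k = x (k - N)"
      proof
        fix k assume "k \<in> Aa"
        then have "k - N \<in> {1..N}" "N + (k - N) = k" unfolding Aa_def by auto
        then show "a k = x (k - N)" using h by metis
      qed
    next
      assume h: "\<forall>k\<in>Aa. a k = x (k - N)"
      show "\<forall>l\<in>{1..N}. x l = a (N+l)"
      proof
        fix l assume "l \<in> {1..N}"
        then have "N + l \<in> Aa" "N + l - N = l" unfolding Aa_def by auto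
        then show "x l = a (N+l)" using h by metis
      qed
    qed
    show "Mi rx a * Omega d N rho ?w y = (if Yc then c else 0) *
        (if \<forall>k\<in>Aa. a k = x (k - N) then Mi rx a * rho (tb N (a t) (x (2*N+2))) ry else 0)"
      unfolding Omega_def P rw ry_def[symmetric] Yc_def cond[symmetric] by auto
  qed
  also have "\<dots> = (if Yc then c else 0) *
      (\<Sum>a\<in>basis d Al. if \<forall>k\<in>Aa. a k = x (k - N) then Mi rx a * rho (tb N (a t) (x (2*N+2))) ry else 0)"
    by (simp only: sum_distrib_left)
  also have "(\<Sum>a\<in>basis d Al. if \<forall>k\<in>Aa. a k = x (k - N) then Mi rx a * rho (tb N (a t) (x (2*N+2))) ry else 0)
      = (\<Sum>s<d. Mi rx (gA N x s) * rho (tb N s (x (2*N+2))) ry)"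
  proof -
    let ?G = "\<lambda>a. if \<forall>k\<in>Aa. a k = x (k - N) then Mi rx a * rho (tb N (a t) (x (2*N+2))) ry else 0"
    have Aleq: "Al = Aa \<union> {t}" unfolding Al_def Aa_def t_def by auto
    have dj: "Aa \<inter> {t} = {}" unfolding Aa_def t_def by auto
    define h where "h = (\<lambda>k. x (k - N))"
    have hA: "restrict h Aa \<in> basis d Aa"
    proof (rule basis_memI)
      fix k assume "k \<in> Aa"
      then have "k - N \<in> all_sys N" unfolding Aa_def all_sys_eq by auto
      then show "restrict h Aa k < d" using basis_mem[OF x] \<open>k \<in> Aa\<close> unfolding h_def by auto
    qed (simp add: restrict_def)
    have "(\<Sum>a\<in>basis d Al. ?G a) = (\<Sum>a1\<in>basis d Aa. \<Sum>a2\<in>basis d {t}. ?G (merge Aa a1 a2))"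
      unfolding Aleq by (rule split_basis[OF dj])
    also have "\<dots> = (\<Sum>a2\<in>basis d {t}. \<Sum>a1\<in>basis d Aa. ?G (merge Aa a1 a2))" by (rule sum.swap)
    also have "\<dots> = (\<Sum>a2\<in>basis d {t}. ?G (merge Aa (restrict h Aa) a2))"
    proof (rule sum.cong[OF refl])
      fix a2
      have "\<And>a1. ?G (merge Aa a1 a2) = (if \<forall>k\<in>Aa. a1 k = h k then ?G (merge Aa a1 a2) else 0)"
        unfolding merge_def h_def by auto
      then have "(\<Sum>a1\<in>basis d Aa. ?G (merge Aa a1 a2)) = (\<Sum>a1\<in>basis d Aa. if \<forall>k\<in>Aa. a1 k = h k then ?G (merge Aa a1 a2) else 0)"
        by simp
      also have "\<dots> = ?G (merge Aa (restrict h Aa) a2)" by (rule collapse[OF finR(3) hA])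
      finally show "(\<Sum>a1\<in>basis d Aa. ?G (merge Aa a1 a2)) = ?G (merge Aa (restrict h Aa) a2)" .
    qed
    also have "\<dots> = (\<Sum>s<d. ?G (merge Aa (restrict h Aa) ((\<lambda>_. undefined)(t:=s))))"
      by (rule sum_basis_single)
    also have "\<dots> = (\<Sum>s<d. Mi rx (gA N x s) * rho (tb N s (x (2*N+2))) ry)"
    proof (rule sum.cong[OF refl])
      fix s
      have m: "merge Aa (restrict h Aa) ((\<lambda>_. undefined)(t:=s)) = gA N x s"
        unfolding merge_def gA_def h_def Aa_def t_def by (auto simp: fun_eq_iff)
      have "\<forall>k\<in>Aa. gA N x s k = x (k - N)" unfolding gA_def Aa_def by auto
      moreover have "gA N x s t = s" unfolding gA_def t_def by auto
      ultimately show "?G (merge Aa (restrict h Aa) ((\<lambda>_. undefined)(t:=s))) = Mi rx (gA N x s) * rho (tb N s (x (2*N+2))) ry"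
        unfolding m by simp
    qed
    finally show ?thesis .
  qed
  finally show ?thesis unfolding Yc_def c_def rx_def ry_def aliceq by simp
qed

lemma S2:
  assumes j: "j \<in> {1..N}" and p: "p \<in> basis d {j, 2*N+2}" and q: "q \<in> basis d {j, 2*N+2}"
  shows "ptrace d (all_sys N) {sysA' N j, sysB N} (mmul d (all_sys N) (op_ext (alice_sys N) Mi (all_sys N)) (Omega d N rho)) p q
   = (1/of_nat d)^N * (\<Sum>a\<in>basis d (alice_sys N). if a (N+j) = q j then
        (\<Sum>s<d. Mi a ((a(N+j := p j))(2*N+1 := s)) * rho (tb N s (p (2*N+2))) (tb N (a (2*N+1)) (q (2*N+2)))) else 0)"
proof -
  define Sj where "Sj = {j, 2*N+2}"
  define Al where "Al = {N+1..2*N+1}"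
  define P where "P = {1..N} - {j}"
  define c where "c = (1/of_nat d :: complex)^N"
  define MO where "MO = mmul d (all_sys N) (op_ext (alice_sys N) Mi (all_sys N)) (Omega d N rho)"
  define F where "F a = (\<Sum>s<d. Mi a ((a(N+j := p j))(2*N+1 := s)) * rho (tb N s (p (2*N+2))) (tb N (a (2*N+1)) (q (2*N+2))))" for a
  have Sj: "{sysA' N j, sysB N} = Sj" unfolding Sj_def sysA'_def sysB_def by simp
  have aliceq: "alice_sys N = Al" unfolding alice_sys_eq Al_def ..
  have SjA: "Sj \<subseteq> all_sys N" unfolding Sj_def all_sys_eq using j by auto
  have diff: "all_sys N - Sj = P \<union> Al" unfolding all_sys_eq Sj_def P_def Al_def using j by auto
  have dj: "P \<inter> Al = {}" unfolding P_def Al_def by auto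
  have finP: "finite P" unfolding P_def by auto
  have pS: "p \<in> basis d Sj" and qS: "q \<in> basis d Sj" using p q unfolding Sj_def by auto
  have "ptrace d (all_sys N) {sysA' N j, sysB N} MO p q = (\<Sum>z\<in>basis d (P \<union> Al). MO (merge Sj p z) (merge Sj q z))"
    unfolding ptrace_def Sj diff merge_def ..
  also have "\<dots> = (\<Sum>z1\<in>basis d P. \<Sum>a\<in>basis d Al. MO (merge Sj p (merge P z1 a)) (merge Sj q (merge P z1 a)))"
    by (rule split_basis[OF dj])
  also have "\<dots> = (\<Sum>a\<in>basis d Al. \<Sum>z1\<in>basis d P. MO (merge Sj p (merge P z1 a)) (merge Sj q (merge P z1 a)))"
    by (rule sum.swap)
  also have "\<dots> = (\<Sum>a\<in>basis d Al. if a (N+j) = q j then c * F a else 0)"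
  proof (rule sum.cong[OF refl])
    fix a assume a: "a \<in> basis d Al"
    define h where "h k = a (N+k)" for k
    have hP: "restrict h P \<in> basis d P"
    proof (rule basis_memI)
      fix k assume "k \<in> P"
      then have "N + k \<in> Al" unfolding P_def Al_def by auto
      then show "restrict h P k < d" using basis_mem[OF a] \<open>k \<in> P\<close> unfolding h_def by auto
    qed (simp add: restrict_def)
    have "\<And>z1. z1 \<in> basis d P \<Longrightarrow> MO (merge Sj p (merge P z1 a)) (merge Sj q (merge P z1 a))
         = (if \<forall>k\<in>P. z1 k = h k then (if a (N+j) = q j then c * F a else 0) else 0)"
    proof -
      fix z1 assume z1: "z1 \<in> basis d P"
      let ?z = "merge P z1 a"
      let ?X = "merge Sj p ?z" and ?Y = "merge Sj q ?z"
      have zb: "?z \<in> basis d (all_sys N - Sj)" unfolding diff by (rule merge_in_basis[OF z1 a])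
      have Xb: "?X \<in> basis d (all_sys N)" using merge_in_basis[OF pS zb] SjA by (simp add: Un_absorb1)
      have Yb: "?Y \<in> basis d (all_sys N)" using merge_in_basis[OF qS zb] SjA by (simp add: Un_absorb1)
      have Ynl: "?Y (N+l) = a (N+l)" if "l \<in> {1..N}" for l
        using that j unfolding merge_def Sj_def P_def by auto
      have Yl: "?Y l = (if l = j then q j else z1 l)" if "l \<in> {1..N}" for l
        using that j unfolding merge_def Sj_def P_def by auto
      have Yc: "(\<forall>l\<in>{1..N}. ?Y l = ?Y (N+l)) \<longleftrightarrow> (a (N+j) = q j \<and> (\<forall>k\<in>P. z1 k = h k))"
        using Ynl Yl j unfolding h_def P_def by (auto split: if_splits)
      have rX: "restrict ?X (alice_sys N) = a"
      proof (rule ext)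
        fix k show "restrict ?X (alice_sys N) k = a k"
          using basis_out[OF a, of k] j unfolding aliceq merge_def Sj_def Al_def P_def by auto
      qed
      have Xb2: "?X (2*N+2) = p (2*N+2)" unfolding merge_def Sj_def by simp
      have rY: "restrict ?Y (AtB_sys N) = tb N (a (2*N+1)) (q (2*N+2))"
        unfolding AtB_eq tb_def merge_def Sj_def P_def using j by (auto simp: fun_eq_iff)
      have gX: "gA N ?X s = (a(N+j := p j))(2*N+1 := s)" if "\<forall>k\<in>P. z1 k = h k" for s
      proof (rule ext)
        fix k
        show "gA N ?X s k = ((a(N+j := p j))(2*N+1 := s)) k"
        proof (cases "k \<in> {N+1..2*N}")
          case True
          then have "k - N \<in> {1..N}" "N + (k - N) = k" by auto
          then show ?thesis using that True j unfolding gA_def merge_def Sj_def P_def h_def by auto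
        next
          case False
          then show ?thesis using basis_out[OF a, of k] j unfolding gA_def Al_def by auto
        qed
      qed
      show "MO ?X ?Y = (if \<forall>k\<in>P. z1 k = h k then (if a (N+j) = q j then c * F a else 0) else 0)"
      proof (cases "\<forall>k\<in>P. z1 k = h k")
        case True
        then show ?thesis unfolding MO_def S1[OF Xb Yb] Yc rX Xb2 rY F_def c_def using gX[OF True] by simp
      next
        case False
        then show ?thesis unfolding MO_def S1[OF Xb Yb] Yc by auto
      qed
    qed
    then have "(\<Sum>z1\<in>basis d P. MO (merge Sj p (merge P z1 a)) (merge Sj q (merge P z1 a)))
        = (\<Sum>z1\<in>basis d P. if \<forall>k\<in>P. z1 k = h k then (if a (N+j) = q j then c * F a else 0) else 0)"
      by (rule sum.cong[OF refl])
    also have "\<dots> = (if a (N+j) = q j then c * F a else 0)"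
      by (rule collapse[OF finP hP])
    finally show "(\<Sum>z1\<in>basis d P. MO (merge Sj p (merge P z1 a)) (merge Sj q (merge P z1 a)))
        = (if a (N+j) = q j then c * F a else 0)" .
  qed
  also have "\<dots> = c * (\<Sum>a\<in>basis d Al. if a (N+j) = q j then F a else 0)"
    by (simp add: sum_distrib_left if_distrib cong: if_cong)
  finally show ?thesis unfolding MO_def c_def F_def aliceq .
qed

lemma cnj_ind: "cnj (if P then 1 else 0) = (if P then 1 else 0)" by simp

lemma sum4_swap:
  "(\<Sum>x\<in>A. \<Sum>y\<in>A. \<Sum>q\<in>A. \<Sum>p\<in>A. f x y q p) = (\<Sum>p\<in>A. \<Sum>q\<in>A. \<Sum>y\<in>A. \<Sum>x\<in>A. f x y q p)"
proof -
  have "(\<Sum>x\<in>A. \<Sum>y\<in>A. \<Sum>q\<in>A. \<Sum>p\<in>A. f x y q p) = (\<Sum>x\<in>A. \<Sum>y\<in>A. \<Sum>p\<in>A. \<Sum>q\<in>A. f x y q p)"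
    by (rule sum.cong[OF refl], rule sum.cong[OF refl], rule sum.swap)
  also have "\<dots> = (\<Sum>x\<in>A. \<Sum>p\<in>A. \<Sum>y\<in>A. \<Sum>q\<in>A. f x y q p)"
    by (rule sum.cong[OF refl], rule sum.swap)
  also have "\<dots> = (\<Sum>p\<in>A. \<Sum>x\<in>A. \<Sum>y\<in>A. \<Sum>q\<in>A. f x y q p)"
    by (rule sum.swap)
  also have "\<dots> = (\<Sum>p\<in>A. \<Sum>x\<in>A. \<Sum>q\<in>A. \<Sum>y\<in>A. f x y q p)"
    by (rule sum.cong[OF refl], rule sum.cong[OF refl], rule sum.swap)
  also have "\<dots> = (\<Sum>p\<in>A. \<Sum>q\<in>A. \<Sum>x\<in>A. \<Sum>y\<in>A. f x y q p)"
    by (rule sum.cong[OF refl], rule sum.swap)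
  also have "\<dots> = (\<Sum>p\<in>A. \<Sum>q\<in>A. \<Sum>y\<in>A. \<Sum>x\<in>A. f x y q p)"
    by (rule sum.cong[OF refl], rule sum.cong[OF refl], rule sum.swap)
  finally show ?thesis .
qed

lemma colY:
  assumes jb: "j \<noteq> b" and p: "p \<in> basis d {j,b}"
  shows "(\<Sum>y\<in>basis d {j,b}. (if y j = y b then 1 else 0) * (G (y b) * (if y j = p j then 1 else 0))) = (G (p j) :: complex)"
proof -
  have pj: "p j < d" using basis_mem[OF p] by auto
  have hb: "restrict (\<lambda>k. p j) {j,b} \<in> basis d {j,b}" using pj by (intro basis_memI) auto
  have "(\<Sum>y\<in>basis d {j,b}. (if y j = y b then 1 else 0) * (G (y b) * (if y j = p j then 1 else 0)))
      = (\<Sum>y\<in>basis d {j,b}. if \<forall>k\<in>{j,b}. y k = p j then G (p j) else 0)"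
    by (intro sum.cong refl) auto
  also have "\<dots> = G (p j)" using collapse[OF _ hb, of "\<lambda>_. G (p j)"] by simp
  finally show ?thesis .
qed

lemma S3:
  assumes jb: "j \<noteq> b"
  shows "trace d {j,b} (mmul d {j,b} (psi_plus d j b) (mmul d {j,b} (mmul d {j,b} (op_ext {b} (\<lambda>x y. Um (x b) (y b)) {j,b}) \<sigma>) (adj (op_ext {b} (\<lambda>x y. Um (x b) (y b)) {j,b}))))
     = (1 / of_nat d) * (\<Sum>p\<in>basis d {j,b}. \<Sum>q\<in>basis d {j,b}. Um (p j) (p b) * \<sigma> p q * cnj (Um (q j) (q b)))"
proof -
  define S where "S = {j,b}"
  define V where "V = op_ext {b} (\<lambda>x y. Um (x b) (y b)) {j,b}"
  have Vy: "V y p = Um (y b) (p b) * (if y j = p j then 1 else 0)" for y p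
    unfolding V_def op_ext_def using jb by (auto simp: restrict_def)
  define T where "T x y q p = ((if x j = x b then 1 else 0) * (if y j = y b then 1 else 0) / of_nat d) * (V y p * \<sigma> p q * cnj (V x q))" for x y q p
  have "trace d S (mmul d S (psi_plus d j b) (mmul d S (mmul d S V \<sigma>) (adj V)))
      = (\<Sum>x\<in>basis d S. \<Sum>y\<in>basis d S. \<Sum>q\<in>basis d S. \<Sum>p\<in>basis d S. T x y q p)"
  proof -
    have "\<And>x y. psi_plus d j b x y = (if x j = x b then 1 else 0) * (if y j = y b then 1 else 0) / of_nat d"
      unfolding psi_plus_def by simp
    then show ?thesis unfolding trace_def mmul_def adj_def T_def
      by (simp add: sum_distrib_left sum_distrib_right sum_divide_distrib mult_ac)
  qed
  also have "\<dots> = (\<Sum>p\<in>basis d S. \<Sum>q\<in>basis d S. \<Sum>y\<in>basis d S. \<Sum>x\<in>basis d S. T x y q p)"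
    by (rule sum4_swap)
  also have "\<dots> = (\<Sum>p\<in>basis d S. \<Sum>q\<in>basis d S. (1 / of_nat d) *
        ((\<Sum>y\<in>basis d S. (if y j = y b then 1 else 0) * V y p) * \<sigma> p q * (\<Sum>x\<in>basis d S. (if x j = x b then 1 else 0) * cnj (V x q))))"
    unfolding T_def by (simp add: sum_distrib_left sum_distrib_right sum_divide_distrib mult_ac)
  also have "\<dots> = (\<Sum>p\<in>basis d S. \<Sum>q\<in>basis d S. (1 / of_nat d) * (Um (p j) (p b) * \<sigma> p q * cnj (Um (q j) (q b))))"
  proof (intro sum.cong refl)
    fix p q assume p: "p \<in> basis d S" and q: "q \<in> basis d S"
    have "(\<Sum>y\<in>basis d S. (if y j = y b then 1 else 0) * V y p) = Um (p j) (p b)"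
      unfolding Vy S_def using colY[OF jb p[unfolded S_def], of "\<lambda>e. Um e (p b)"] by simp
    moreover have "(\<Sum>x\<in>basis d S. (if x j = x b then 1 else 0) * cnj (V x q)) = cnj (Um (q j) (q b))"
      unfolding Vy S_def using colY[OF jb q[unfolded S_def], of "\<lambda>e. cnj (Um e (q b))"] by (simp only: cnj_ind complex_cnj_mult)
    ultimately show "(1 / of_nat d) * ((\<Sum>y\<in>basis d S. (if y j = y b then 1 else 0) * V y p) * \<sigma> p q * (\<Sum>x\<in>basis d S. (if x j = x b then 1 else 0) * cnj (V x q)))
        = (1 / of_nat d) * (Um (p j) (p b) * \<sigma> p q * cnj (Um (q j) (q b)))" by simp
  qed
  finally show ?thesis unfolding S_def V_def by (simp add: sum_distrib_left)
qed

definition zf :: "nat \<Rightarrow> nat \<Rightarrow> (cfg \<Rightarrow> complex) \<Rightarrow> (cfg \<Rightarrow> complex) \<Rightarrow> cfg \<Rightarrow> nat \<Rightarrow> complex" where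
  "zf d N u w c e = (\<Sum>s<d. u (tb N s e) * cnj (w (c(2*N+1 := s))))"

lemma fiberXY:
  fixes X Y :: "cfg \<Rightarrow> complex"
  assumes "jj \<in> A" "t \<in> A" "jj \<noteq> t"
    and Yj: "\<And>a \<alpha>. Y (a(jj:=\<alpha>)) = Y a" and Yt: "\<And>a s. Y (a(t:=s)) = Y a"
    and YX: "\<And>a. Y a = (\<Sum>s<d. \<Sum>\<alpha><d. X ((a(t:=s))(jj:=\<alpha>)))"
  shows "of_nat d * of_nat d * (\<Sum>a\<in>basis d A. cnj (X a) * Y a) = (\<Sum>a\<in>basis d A. cnj (Y a) * Y a)"
proof -
  have "of_nat d * (\<Sum>a\<in>basis d A. cnj (X a) * Y a) = (\<Sum>a\<in>basis d A. \<Sum>\<alpha><d. cnj (X (a(jj:=\<alpha>))) * Y (a(jj:=\<alpha>)))"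
    by (rule fiber_sum[OF assms(1), symmetric])
  also have "\<dots> = (\<Sum>a\<in>basis d A. cnj (\<Sum>\<alpha><d. X (a(jj:=\<alpha>))) * Y a)"
    by (simp add: Yj cnj_sum sum_distrib_right)
  finally have e1: "of_nat d * (\<Sum>a\<in>basis d A. cnj (X a) * Y a) = (\<Sum>a\<in>basis d A. cnj (\<Sum>\<alpha><d. X (a(jj:=\<alpha>))) * Y a)" .
  have "of_nat d * (\<Sum>a\<in>basis d A. cnj (\<Sum>\<alpha><d. X (a(jj:=\<alpha>))) * Y a)
      = (\<Sum>a\<in>basis d A. \<Sum>s<d. cnj (\<Sum>\<alpha><d. X ((a(t:=s))(jj:=\<alpha>))) * Y (a(t:=s)))"
    by (rule fiber_sum[OF assms(2), symmetric])
  also have "\<dots> = (\<Sum>a\<in>basis d A. cnj (\<Sum>s<d. \<Sum>\<alpha><d. X ((a(t:=s))(jj:=\<alpha>))) * Y a)"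
    by (simp add: Yt cnj_sum sum_distrib_right)
  also have "\<dots> = (\<Sum>a\<in>basis d A. cnj (Y a) * Y a)" by (simp only: YX[symmetric])
  finally show ?thesis using e1 by (simp add: mult.assoc)
qed

lemma sum_pair_eval:
  assumes "j \<noteq> b"
  shows "(\<Sum>q\<in>basis d {j,b}. G (q j) (q b)) = (\<Sum>\<alpha><d. \<Sum>e<d. G \<alpha> e)"
  using sum_basis_pair[OF assms, where d=d and F="\<lambda>q. G (q j) (q b)"] assms by simp

lemma single:
  assumes j: "j \<in> {1..N}" and d: "d > 0"
  shows "(\<Sum>p\<in>basis d {j,2*N+2}. \<Sum>q\<in>basis d {j,2*N+2}. \<Sum>a\<in>basis d (alice_sys N). \<Sum>s<d.
      Uf (N+j) (p j) (p (2*N+2)) * cnj (Uf (N+j) (q j) (q (2*N+2))) * (if a (N+j) = q j then 1 else 0) *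
      (w a * cnj (w ((a(N+j := p j))(2*N+1 := s)))) * (u (tb N s (p (2*N+2))) * cnj (u (tb N (a (2*N+1)) (q (2*N+2))))))
    = (\<Sum>a\<in>basis d (alice_sys N). cnj (Yv d Uf (zf d N u w) (N+j) a) * Yv d Uf (zf d N u w) (N+j) a) / (of_nat d * of_nat d)"
proof -
  define b where "b = 2*N+2"
  define t where "t = 2*N+1"
  define jj where "jj = N+j"
  define A where "A = alice_sys N"
  define Y where "Y = Yv d Uf (zf d N u w) jj"
  define X where "X a = cnj (w a) * (\<Sum>e<d. Uf jj (a jj) e * u (tb N (a t) e))" for a
  have jb: "j \<noteq> b" unfolding b_def using j by auto
  have jjA: "jj \<in> A" and tA: "t \<in> A" and jjt: "jj \<noteq> t"
    unfolding jj_def A_def t_def alice_sys_eq using j by auto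
  define f where "f p q a s = Uf jj (p j) (p b) * cnj (Uf jj (q j) (q b)) * (if a jj = q j then 1 else 0) *
      (w a * cnj (w ((a(jj := p j))(t := s)))) * (u (tb N s (p b)) * cnj (u (tb N (a t) (q b))))" for p q a s
  let ?P = "basis d {j,b}"
  have "(\<Sum>p\<in>?P. \<Sum>q\<in>?P. \<Sum>a\<in>basis d A. \<Sum>s<d. f p q a s) = (\<Sum>p\<in>?P. \<Sum>a\<in>basis d A. \<Sum>q\<in>?P. \<Sum>s<d. f p q a s)"
    by (rule sum.cong[OF refl], rule sum.swap)
  also have "\<dots> = (\<Sum>a\<in>basis d A. \<Sum>p\<in>?P. \<Sum>q\<in>?P. \<Sum>s<d. f p q a s)"
    by (rule sum.swap)
  also have "\<dots> = (\<Sum>a\<in>basis d A. cnj (X a) * Y a)"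
  proof (rule sum.cong[OF refl])
    fix a assume a: "a \<in> basis d A"
    define Qa where "Qa = (\<Sum>q\<in>?P. (if a jj = q j then 1 else 0) * cnj (Uf jj (q j) (q b)) * cnj (u (tb N (a t) (q b))))"
    define Ra where "Ra = (\<Sum>p\<in>?P. \<Sum>s<d. Uf jj (p j) (p b) * cnj (w ((a(jj := p j))(t := s))) * u (tb N s (p b)))"
    have "(\<Sum>p\<in>?P. \<Sum>q\<in>?P. \<Sum>s<d. f p q a s) = (w a * Qa) * Ra"
      unfolding Qa_def Ra_def f_def by (simp add: sum_distrib_left sum_distrib_right mult_ac)
    also have "w a * Qa = cnj (X a)"
    proof -
      have ajj: "a jj < d" using basis_mem[OF a jjA] .
      have "Qa = (\<Sum>\<alpha><d. \<Sum>e<d. (if a jj = \<alpha> then 1 else 0) * cnj (Uf jj \<alpha> e) * cnj (u (tb N (a t) e)))"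
        unfolding Qa_def by (rule sum_pair_eval[OF jb])
      also have "\<dots> = (\<Sum>e<d. cnj (Uf jj (a jj) e) * cnj (u (tb N (a t) e)))"
      proof -
        have "\<And>\<alpha>. (\<Sum>e<d. (if a jj = \<alpha> then 1 else 0) * cnj (Uf jj \<alpha> e) * cnj (u (tb N (a t) e)))
            = (if \<alpha> = a jj then (\<Sum>e<d. cnj (Uf jj \<alpha> e) * cnj (u (tb N (a t) e))) else 0)"
          by auto
        then show ?thesis using ajj by (simp add: sum.delta)
      qed
      finally show ?thesis unfolding X_def by (simp add: cnj_sum sum_distrib_left)
    qed
    also have "Ra = Y a"
    proof -
      have "Ra = (\<Sum>\<alpha><d. \<Sum>e<d. \<Sum>s<d. Uf jj \<alpha> e * cnj (w ((a(jj := \<alpha>))(t := s))) * u (tb N s e))"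
        unfolding Ra_def by (rule sum_pair_eval[OF jb])
      also have "\<dots> = Y a" unfolding Y_def Yv_def zf_def t_def
        by (simp add: sum_distrib_left mult_ac)
      finally show ?thesis .
    qed
    finally show "(\<Sum>p\<in>?P. \<Sum>q\<in>?P. \<Sum>s<d. f p q a s) = cnj (X a) * Y a" .
  qed
  finally have L: "(\<Sum>p\<in>?P. \<Sum>q\<in>?P. \<Sum>a\<in>basis d A. \<Sum>s<d. f p q a s) = (\<Sum>a\<in>basis d A. cnj (X a) * Y a)" .
  have upd: "((a(t:=s))(jj:=\<alpha>))(t:=s') = (a(jj:=\<alpha>))(t:=s')" for a s \<alpha> s'
    using jjt by (auto simp: fun_eq_iff)
  have Yj: "Y (a(jj:=\<alpha>)) = Y a" for a \<alpha> unfolding Y_def by (rule Yv_upd)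
  have Yt: "Y (a(t:=s)) = Y a" for a s
    unfolding Y_def Yv_def zf_def t_def[symmetric] using upd by simp
  have YX: "Y a = (\<Sum>s<d. \<Sum>\<alpha><d. X ((a(t:=s))(jj:=\<alpha>)))" for a
  proof -
    have tw: "(a(t:=s))(jj:=\<alpha>) = (a(jj:=\<alpha>))(t:=s)" for s \<alpha> using jjt by (auto simp: fun_eq_iff)
    have "Y a = (\<Sum>\<alpha><d. \<Sum>e<d. \<Sum>s<d. Uf jj \<alpha> e * (u (tb N s e) * cnj (w ((a(jj:=\<alpha>))(t:=s)))))"
      unfolding Y_def Yv_def zf_def t_def by (simp add: sum_distrib_left)
    also have "\<dots> = (\<Sum>\<alpha><d. \<Sum>s<d. \<Sum>e<d. Uf jj \<alpha> e * (u (tb N s e) * cnj (w ((a(jj:=\<alpha>))(t:=s)))))"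
      by (rule sum.cong[OF refl], rule sum.swap)
    also have "\<dots> = (\<Sum>s<d. \<Sum>\<alpha><d. \<Sum>e<d. Uf jj \<alpha> e * (u (tb N s e) * cnj (w ((a(jj:=\<alpha>))(t:=s)))))"
      by (rule sum.swap)
    also have "\<dots> = (\<Sum>s<d. \<Sum>\<alpha><d. X ((a(t:=s))(jj:=\<alpha>)))"
      unfolding X_def tw using jjt by (simp add: sum_distrib_left mult_ac)
    finally show ?thesis .
  qed
  have "of_nat d * of_nat d * (\<Sum>a\<in>basis d A. cnj (X a) * Y a) = (\<Sum>a\<in>basis d A. cnj (Y a) * Y a)"
    by (rule fiberXY[OF jjA tA jjt Yj Yt YX])
  then have "(\<Sum>a\<in>basis d A. cnj (X a) * Y a) = (\<Sum>a\<in>basis d A. cnj (Y a) * Y a) / (of_nat d * of_nat d)"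
    using d by (simp add: field_simps)
  then show ?thesis using L unfolding f_def b_def t_def jj_def A_def Y_def by simp
qed

lemma pull4:
  "(\<Sum>p\<in>A. \<Sum>q\<in>B. \<Sum>a\<in>C. \<Sum>s\<in>D. \<Sum>k\<in>K. f p q a s k) = (\<Sum>k\<in>K. \<Sum>p\<in>A. \<Sum>q\<in>B. \<Sum>a\<in>C. \<Sum>s\<in>D. f p q a s k)"
proof -
  have "(\<Sum>p\<in>A. \<Sum>q\<in>B. \<Sum>a\<in>C. \<Sum>s\<in>D. \<Sum>k\<in>K. f p q a s k) = (\<Sum>p\<in>A. \<Sum>q\<in>B. \<Sum>a\<in>C. \<Sum>k\<in>K. \<Sum>s\<in>D. f p q a s k)"
    by (rule sum.cong[OF refl], rule sum.cong[OF refl], rule sum.cong[OF refl], rule sum.swap)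
  also have "\<dots> = (\<Sum>p\<in>A. \<Sum>q\<in>B. \<Sum>k\<in>K. \<Sum>a\<in>C. \<Sum>s\<in>D. f p q a s k)"
    by (rule sum.cong[OF refl], rule sum.cong[OF refl], rule sum.swap)
  also have "\<dots> = (\<Sum>p\<in>A. \<Sum>k\<in>K. \<Sum>q\<in>B. \<Sum>a\<in>C. \<Sum>s\<in>D. f p q a s k)"
    by (rule sum.cong[OF refl], rule sum.swap)
  also have "\<dots> = (\<Sum>k\<in>K. \<Sum>p\<in>A. \<Sum>q\<in>B. \<Sum>a\<in>C. \<Sum>s\<in>D. f p q a s k)"
    by (rule sum.swap)
  finally show ?thesis .
qed

lemma if_sum: "(if c then (\<Sum>s\<in>A. X s) else 0) = (\<Sum>s\<in>A. (if c then 1 else 0) * (X s :: complex))"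
  by simp

lemma tb_basis: "s < d \<Longrightarrow> e < d \<Longrightarrow> tb N s e \<in> basis d (AtB_sys N)"
  unfolding tb_def AtB_eq by (intro basis_memI) auto

lemma term_ij:
  assumes j: "j \<in> {1..N}" and d: "d > 0"
    and Mdec: "\<forall>x\<in>basis d (alice_sys N). \<forall>y\<in>basis d (alice_sys N). Mi x y = (\<Sum>k<r. w k x * cnj (w k y))"
    and Rdec: "\<forall>x\<in>basis d (AtB_sys N). \<forall>y\<in>basis d (AtB_sys N). rho x y = (\<Sum>m<rr. u m x * cnj (u m y))"
  shows "(let S = {sysA' N j, sysB N};
            sigma = ptrace d (all_sys N) S
                      (mmul d (all_sys N) (op_ext (alice_sys N) Mi (all_sys N)) (Omega d N rho));
            V = op_ext {sysB N} (opB N (Uf (N+j))) S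
        in trace d S (mmul d S (psi_plus d (sysA' N j) (sysB N))
                        (mmul d S (mmul d S V sigma) (adj V))))
    = (1/of_nat d)^(N+1) * (\<Sum>k<r. \<Sum>m<rr. (\<Sum>a\<in>basis d (alice_sys N). cnj (Yv d Uf (zf d N (u m) (w k)) (N+j) a) * Yv d Uf (zf d N (u m) (w k)) (N+j) a) / (of_nat d * of_nat d))"
proof -
  define b where "b = 2*N+2"
  define t where "t = 2*N+1"
  define jj where "jj = N+j"
  define Al where "Al = alice_sys N"
  define Um where "Um = Uf jj"
  define MO where "MO = mmul d (all_sys N) (op_ext (alice_sys N) Mi (all_sys N)) (Omega d N rho)"
  define \<sigma> where "\<sigma> = ptrace d (all_sys N) {sysA' N j, sysB N} MO"
  have jb: "j \<noteq> b" unfolding b_def using j by auto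
  have Seq: "{sysA' N j, sysB N} = {j, b}" unfolding sysA'_def sysB_def b_def by simp
  have opB: "opB N Um = (\<lambda>x y. Um (x b) (y b))" unfolding opB_def sysB_def b_def ..
  define C where "C p q a = Um (p j) (p b) * cnj (Um (q j) (q b)) * (if a jj = q j then 1 else 0)" for p q a
  define a' where "a' a p s = (a(jj := p j))(t := s)" for a :: cfg and p :: cfg and s
  let ?P = "basis d {j,b}"
  have "(let S = {sysA' N j, sysB N};
            sigma = ptrace d (all_sys N) S MO;
            V = op_ext {sysB N} (opB N (Uf (N+j))) S
        in trace d S (mmul d S (psi_plus d (sysA' N j) (sysB N))
                        (mmul d S (mmul d S V sigma) (adj V))))
      = trace d {j,b} (mmul d {j,b} (psi_plus d j b) (mmul d {j,b} (mmul d {j,b} (op_ext {b} (\<lambda>x y. Um (x b) (y b)) {j,b}) \<sigma>) (adj (op_ext {b} (\<lambda>x y. Um (x b) (y b)) {j,b}))))"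
    unfolding Let_def Seq \<sigma>_def Um_def jj_def
    by (simp add: sysA'_def sysB_def b_def opB_def)
  also have "\<dots> = (1 / of_nat d) * (\<Sum>p\<in>?P. \<Sum>q\<in>?P. Um (p j) (p b) * \<sigma> p q * cnj (Um (q j) (q b)))"
    by (rule S3[OF jb])
  also have "\<dots> = (1/of_nat d)^(N+1) * (\<Sum>p\<in>?P. \<Sum>q\<in>?P. \<Sum>a\<in>basis d Al. \<Sum>s<d.
        C p q a * (Mi a (a' a p s) * rho (tb N s (p b)) (tb N (a t) (q b))))"
  proof -
    have "\<And>p q. p \<in> ?P \<Longrightarrow> q \<in> ?P \<Longrightarrow> Um (p j) (p b) * \<sigma> p q * cnj (Um (q j) (q b))
        = (1/of_nat d)^N * (\<Sum>a\<in>basis d Al. \<Sum>s<d. C p q a * (Mi a (a' a p s) * rho (tb N s (p b)) (tb N (a t) (q b))))"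
    proof -
      fix p q assume p: "p \<in> ?P" and q: "q \<in> ?P"
      have s2: "\<sigma> p q = (1/of_nat d)^N * (\<Sum>a\<in>basis d Al. if a jj = q j then
          (\<Sum>s<d. Mi a (a' a p s) * rho (tb N s (p b)) (tb N (a t) (q b))) else 0)"
        unfolding \<sigma>_def MO_def Al_def a'_def jj_def t_def b_def
        by (rule S2[OF j p[unfolded b_def] q[unfolded b_def]])
      show "Um (p j) (p b) * \<sigma> p q * cnj (Um (q j) (q b))
        = (1/of_nat d)^N * (\<Sum>a\<in>basis d Al. \<Sum>s<d. C p q a * (Mi a (a' a p s) * rho (tb N s (p b)) (tb N (a t) (q b))))"
        unfolding s2 C_def if_sum by (simp add: sum_distrib_left sum_distrib_right mult_ac)
    qed
    then have "(\<Sum>p\<in>?P. \<Sum>q\<in>?P. Um (p j) (p b) * \<sigma> p q * cnj (Um (q j) (q b)))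
       = (\<Sum>p\<in>?P. \<Sum>q\<in>?P. (1/of_nat d)^N * (\<Sum>a\<in>basis d Al. \<Sum>s<d. C p q a * (Mi a (a' a p s) * rho (tb N s (p b)) (tb N (a t) (q b)))))"
      by (intro sum.cong refl) auto
    then show ?thesis by (simp add: sum_distrib_left)
  qed
  also have "(\<Sum>p\<in>?P. \<Sum>q\<in>?P. \<Sum>a\<in>basis d Al. \<Sum>s<d. C p q a * (Mi a (a' a p s) * rho (tb N s (p b)) (tb N (a t) (q b))))
      = (\<Sum>p\<in>?P. \<Sum>q\<in>?P. \<Sum>a\<in>basis d Al. \<Sum>s<d. \<Sum>k<r. \<Sum>m<rr.
           C p q a * (w k a * cnj (w k (a' a p s))) * (u m (tb N s (p b)) * cnj (u m (tb N (a t) (q b)))))"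
  proof (intro sum.cong refl)
    fix p q a s assume p: "p \<in> ?P" and q: "q \<in> ?P" and a: "a \<in> basis d Al" and s: "s \<in> {..<d}"
    have pj: "p j < d" and pb: "p b < d" and qb: "q b < d" using basis_mem[OF p] basis_mem[OF q] by auto
    have jjA: "jj \<in> Al" and tA: "t \<in> Al" unfolding jj_def t_def Al_def alice_sys_eq using j by auto
    have at: "a t < d" using basis_mem[OF a tA] .
    have a'b: "a' a p s \<in> basis d Al" unfolding a'_def using a pj s jjA tA by (intro basis_upd) auto
    have "Mi a (a' a p s) = (\<Sum>k<r. w k a * cnj (w k (a' a p s)))" using Mdec a a'b unfolding Al_def by blast
    moreover have "rho (tb N s (p b)) (tb N (a t) (q b)) = (\<Sum>m<rr. u m (tb N s (p b)) * cnj (u m (tb N (a t) (q b))))"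
    proof -
      have sd: "s < d" using s by simp
      show ?thesis using Rdec tb_basis[OF sd pb] tb_basis[OF at qb] by blast
    qed
    ultimately show "C p q a * (Mi a (a' a p s) * rho (tb N s (p b)) (tb N (a t) (q b)))
      = (\<Sum>k<r. \<Sum>m<rr. C p q a * (w k a * cnj (w k (a' a p s))) * (u m (tb N s (p b)) * cnj (u m (tb N (a t) (q b)))))"
      by (simp add: sum_product sum_distrib_left mult_ac) (rule sum.swap)
  qed
  also have "\<dots> = (\<Sum>k<r. \<Sum>p\<in>?P. \<Sum>q\<in>?P. \<Sum>a\<in>basis d Al. \<Sum>s<d. \<Sum>m<rr.
           C p q a * (w k a * cnj (w k (a' a p s))) * (u m (tb N s (p b)) * cnj (u m (tb N (a t) (q b)))))"
    by (rule pull4)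
  also have "\<dots> = (\<Sum>k<r. \<Sum>m<rr. \<Sum>p\<in>?P. \<Sum>q\<in>?P. \<Sum>a\<in>basis d Al. \<Sum>s<d.
           C p q a * (w k a * cnj (w k (a' a p s))) * (u m (tb N s (p b)) * cnj (u m (tb N (a t) (q b)))))"
    by (rule sum.cong[OF refl], rule pull4)
  also have "\<dots> = (\<Sum>k<r. \<Sum>m<rr. (\<Sum>a\<in>basis d (alice_sys N). cnj (Yv d Uf (zf d N (u m) (w k)) (N+j) a) * Yv d Uf (zf d N (u m) (w k)) (N+j) a) / (of_nat d * of_nat d))"
  proof (intro sum.cong refl)
    fix k m
    show "(\<Sum>p\<in>?P. \<Sum>q\<in>?P. \<Sum>a\<in>basis d Al. \<Sum>s<d.
           C p q a * (w k a * cnj (w k (a' a p s))) * (u m (tb N s (p b)) * cnj (u m (tb N (a t) (q b)))))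
        = (\<Sum>a\<in>basis d (alice_sys N). cnj (Yv d Uf (zf d N (u m) (w k)) (N+j) a) * Yv d Uf (zf d N (u m) (w k)) (N+j) a) / (of_nat d * of_nat d)"
      using single[OF j d, of Uf "w k" "u m"] unfolding C_def a'_def Um_def jj_def Al_def b_def t_def .
  qed
  finally show ?thesis unfolding MO_def by simp
qed

lemma pull_out3:
  "(\<Sum>i\<in>I. \<Sum>k\<in>K i. \<Sum>m\<in>R. \<Sum>a\<in>A. f i k m a) = (\<Sum>a\<in>A. \<Sum>i\<in>I. \<Sum>k\<in>K i. \<Sum>m\<in>R. f i k m a)"
proof -
  have "(\<Sum>i\<in>I. \<Sum>k\<in>K i. \<Sum>m\<in>R. \<Sum>a\<in>A. f i k m a) = (\<Sum>i\<in>I. \<Sum>k\<in>K i. \<Sum>a\<in>A. \<Sum>m\<in>R. f i k m a)"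
    by (rule sum.cong[OF refl], rule sum.cong[OF refl], rule sum.swap)
  also have "\<dots> = (\<Sum>i\<in>I. \<Sum>a\<in>A. \<Sum>k\<in>K i. \<Sum>m\<in>R. f i k m a)"
    by (rule sum.cong[OF refl], rule sum.swap)
  also have "\<dots> = (\<Sum>a\<in>A. \<Sum>i\<in>I. \<Sum>k\<in>K i. \<Sum>m\<in>R. f i k m a)"
    by (rule sum.swap)
  finally show ?thesis .
qed

lemma pull_out2:
  "(\<Sum>i\<in>I. \<Sum>k\<in>K i. \<Sum>m\<in>R. f i k m) = (\<Sum>m\<in>R. \<Sum>i\<in>I. \<Sum>k\<in>K i. f i k m)"
proof -
  have "(\<Sum>i\<in>I. \<Sum>k\<in>K i. \<Sum>m\<in>R. f i k m) = (\<Sum>i\<in>I. \<Sum>m\<in>R. \<Sum>k\<in>K i. f i k m)"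
    by (rule sum.cong[OF refl], rule sum.swap)
  also have "\<dots> = (\<Sum>m\<in>R. \<Sum>i\<in>I. \<Sum>k\<in>K i. f i k m)"
    by (rule sum.swap)
  finally show ?thesis .
qed

lemma unitary_unit:
  assumes "unitary_op d {sysB N} (opB N Um)"
  shows "unit_mat d Um"
proof -
  define b where "b = sysB N"
  define c :: "nat \<Rightarrow> cfg" where "c \<alpha> = (\<lambda>_. undefined)(b := \<alpha>)" for \<alpha>
  have cb: "\<alpha> < d \<Longrightarrow> c \<alpha> \<in> basis d {b}" for \<alpha> unfolding c_def by (intro basis_memI) auto
  have V: "opB N Um x y = Um (x b) (y b)" for x y unfolding opB_def b_def ..
  have id: "idop {b} (c \<alpha>) (c \<alpha>') = (if \<alpha> = \<alpha>' then 1 else 0)" for \<alpha> \<alpha>' unfolding idop_def c_def by simp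
  show ?thesis unfolding unit_mat_def
  proof (intro conjI allI impI)
    fix \<alpha> \<alpha>' assume a: "\<alpha> < d" "\<alpha>' < d"
    have "mmul d {b} (opB N Um) (adj (opB N Um)) (c \<alpha>) (c \<alpha>') = idop {b} (c \<alpha>) (c \<alpha>')"
      using assms cb[OF a(1)] cb[OF a(2)] unfolding unitary_op_def b_def by blast
    moreover have "mmul d {b} (opB N Um) (adj (opB N Um)) (c \<alpha>) (c \<alpha>') = (\<Sum>e<d. Um \<alpha> e * cnj (Um \<alpha>' e))"
      unfolding mmul_def adj_def V sum_basis_single by (simp add: c_def)
    ultimately show "(\<Sum>e<d. Um \<alpha> e * cnj (Um \<alpha>' e)) = (if \<alpha> = \<alpha>' then 1 else 0)" unfolding id by simp
  next
    fix \<alpha> \<alpha>' assume a: "\<alpha> < d" "\<alpha>' < d"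
    have "mmul d {b} (adj (opB N Um)) (opB N Um) (c \<alpha>) (c \<alpha>') = idop {b} (c \<alpha>) (c \<alpha>')"
      using assms cb[OF a(1)] cb[OF a(2)] unfolding unitary_op_def b_def by blast
    moreover have "mmul d {b} (adj (opB N Um)) (opB N Um) (c \<alpha>) (c \<alpha>') = (\<Sum>e<d. cnj (Um e \<alpha>) * Um e \<alpha>')"
      unfolding mmul_def adj_def V sum_basis_single by (simp add: c_def)
    ultimately show "(\<Sum>e<d. cnj (Um e \<alpha>) * Um e \<alpha>') = (if \<alpha> = \<alpha>' then 1 else 0)" unfolding id by simp
  qed
qed

lemma trace_tb: "trace d (AtB_sys N) rho = (\<Sum>s<d. \<Sum>e<d. rho (tb N s e) (tb N s e))"
proof -
  have ne: "2*N+1 \<noteq> 2*N+2" by simp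
  have "\<And>s e. ((\<lambda>_. undefined)(2*N+2 := e))(2*N+1 := s) = tb N s e"
    unfolding tb_def by (auto simp: fun_eq_iff)
  then show ?thesis unfolding trace_def AtB_eq sum_basis_pair[OF ne] by simp
qed

lemma zr_total:
  fixes M :: "nat \<Rightarrow> qop" and wM :: "nat \<Rightarrow> nat \<Rightarrow> cfg \<Rightarrow> complex" and uu :: "nat \<Rightarrow> cfg \<Rightarrow> complex"
  assumes finI: "finite I"
   and Mdec: "\<forall>i\<in>I. \<forall>x\<in>basis d (alice_sys N). \<forall>y\<in>basis d (alice_sys N). M i x y = (\<Sum>k<rM i. wM i k x * cnj (wM i k y))"
   and Msum: "\<forall>x\<in>basis d (alice_sys N). \<forall>y\<in>basis d (alice_sys N). (\<Sum>i\<in>I. M i x y) = idop (alice_sys N) x y"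
   and Rdec: "\<forall>x\<in>basis d (AtB_sys N). \<forall>y\<in>basis d (AtB_sys N). rho x y = (\<Sum>m<rr. uu m x * cnj (uu m y))"
   and tr: "trace d (AtB_sys N) rho = 1"
  shows "(\<Sum>i\<in>I. \<Sum>k<rM i. \<Sum>m<rr. \<Sum>a\<in>basis d (alice_sys N). \<Sum>e<d. (cmod (zf d N (uu m) (wM i k) a e))^2) = real d ^ (N+1)"
proof -
  define B where "B = basis d (alice_sys N)"
  define t where "t = 2*N+1"
  define z where "z i k m a e = zf d N (uu m) (wM i k) a e" for i k m a e
  have tA: "t \<in> alice_sys N" unfolding t_def alice_sys_eq by auto
  have point: "(\<Sum>i\<in>I. \<Sum>k<rM i. \<Sum>m<rr. cnj (z i k m a e) * z i k m a e) = (\<Sum>s<d. rho (tb N s e) (tb N s e))"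
    if a: "a \<in> B" and e: "e < d" for a e
  proof -
    define X where "X m s s' = cnj (uu m (tb N s e)) * uu m (tb N s' e)" for m s s'
    define W where "W i k s s' = wM i k (a(t:=s)) * cnj (wM i k (a(t:=s')))" for i k s s'
    have "(\<Sum>i\<in>I. \<Sum>k<rM i. \<Sum>m<rr. cnj (z i k m a e) * z i k m a e)
        = (\<Sum>i\<in>I. \<Sum>k<rM i. \<Sum>m<rr. \<Sum>s<d. \<Sum>s'<d. X m s s' * W i k s s')"
      unfolding z_def zf_def X_def W_def t_def
      by (intro sum.cong refl, simp add: cnj_sum sum_product mult_ac, rule sum.swap)
    also have "\<dots> = (\<Sum>s<d. \<Sum>i\<in>I. \<Sum>k<rM i. \<Sum>m<rr. \<Sum>s'<d. X m s s' * W i k s s')"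
      by (rule pull_out3)
    also have "\<dots> = (\<Sum>s<d. \<Sum>s'<d. \<Sum>i\<in>I. \<Sum>k<rM i. \<Sum>m<rr. X m s s' * W i k s s')"
      by (rule sum.cong[OF refl], rule pull_out3)
    also have "\<dots> = (\<Sum>s<d. \<Sum>s'<d. (\<Sum>m<rr. X m s s') * (\<Sum>i\<in>I. \<Sum>k<rM i. W i k s s'))"
    proof (rule sum.cong[OF refl], rule sum.cong[OF refl])
      fix s s'
      show "(\<Sum>i\<in>I. \<Sum>k<rM i. \<Sum>m<rr. X m s s' * W i k s s') = (\<Sum>m<rr. X m s s') * (\<Sum>i\<in>I. \<Sum>k<rM i. W i k s s')"
        by (simp add: sum_distrib_left sum_distrib_right)
    qed
    also have "\<dots> = (\<Sum>s<d. \<Sum>s'<d. rho (tb N s' e) (tb N s e) * (if s = s' then 1 else 0))"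
    proof (intro sum.cong refl)
      fix s s' assume s: "s \<in> {..<d}" and s': "s' \<in> {..<d}"
      have tbs: "tb N s e \<in> basis d (AtB_sys N)" "tb N s' e \<in> basis d (AtB_sys N)"
        using tb_basis s s' e by auto
      have as: "a(t:=s) \<in> B" "a(t:=s') \<in> B" using a s s' tA unfolding B_def by (auto intro: basis_upd)
      have "(\<Sum>m<rr. X m s s') = rho (tb N s' e) (tb N s e)"
        unfolding X_def using Rdec tbs by (simp add: mult.commute)
      moreover have "(\<Sum>i\<in>I. \<Sum>k<rM i. W i k s s') = (\<Sum>i\<in>I. M i (a(t:=s)) (a(t:=s')))"
        unfolding W_def using Mdec as unfolding B_def by (intro sum.cong refl) auto
      moreover have "(\<Sum>i\<in>I. M i (a(t:=s)) (a(t:=s'))) = idop (alice_sys N) (a(t:=s)) (a(t:=s'))"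
        using Msum as unfolding B_def by blast
      moreover have "idop (alice_sys N) (a(t:=s)) (a(t:=s')) = (if s = s' then 1 else 0)"
        unfolding idop_def using tA by (auto split: if_splits)
      ultimately show "(\<Sum>m<rr. X m s s') * (\<Sum>i\<in>I. \<Sum>k<rM i. W i k s s') = rho (tb N s' e) (tb N s e) * (if s = s' then 1 else 0)"
        by simp
    qed
    also have "\<dots> = (\<Sum>s<d. rho (tb N s e) (tb N s e))"
      by (simp add: if_distrib cong: if_cong)
    finally show ?thesis .
  qed
  have "complex_of_real (\<Sum>i\<in>I. \<Sum>k<rM i. \<Sum>m<rr. \<Sum>a\<in>B. \<Sum>e<d. (cmod (z i k m a e))^2)
      = (\<Sum>i\<in>I. \<Sum>k<rM i. \<Sum>m<rr. \<Sum>a\<in>B. \<Sum>e<d. cnj (z i k m a e) * z i k m a e)"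
    by (simp add: of_real_sum cnj_mult_self)
  also have "\<dots> = (\<Sum>a\<in>B. \<Sum>i\<in>I. \<Sum>k<rM i. \<Sum>m<rr. \<Sum>e<d. cnj (z i k m a e) * z i k m a e)"
    by (rule pull_out3)
  also have "\<dots> = (\<Sum>a\<in>B. \<Sum>e<d. \<Sum>i\<in>I. \<Sum>k<rM i. \<Sum>m<rr. cnj (z i k m a e) * z i k m a e)"
    by (rule sum.cong[OF refl], rule pull_out3)
  also have "\<dots> = (\<Sum>a\<in>B. \<Sum>e<d. \<Sum>s<d. rho (tb N s e) (tb N s e))"
    by (rule sum.cong[OF refl], rule sum.cong[OF refl], rule point) auto
  also have "\<dots> = of_nat (card B) * (\<Sum>e<d. \<Sum>s<d. rho (tb N s e) (tb N s e))" by simp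
  also have "(\<Sum>e<d. \<Sum>s<d. rho (tb N s e) (tb N s e)) = trace d (AtB_sys N) rho"
    unfolding trace_tb by (rule sum.swap)
  also have "card B = d ^ (N+1)" unfolding B_def alice_sys_eq by (simp add: card_basis)
  finally have "complex_of_real (\<Sum>i\<in>I. \<Sum>k<rM i. \<Sum>m<rr. \<Sum>a\<in>B. \<Sum>e<d. (cmod (z i k m a e))^2) = complex_of_real (real d ^ (N+1))"
    using tr by simp
  then show ?thesis unfolding z_def B_def by (simp only: of_real_eq_iff)
qed

lemma shift_image: "(+) (N::nat) ` {1..N} = {N+1..2*N}"
  by (auto simp: image_iff intro!: bexI[where x="x - N" for x])

theorem proposition3:
  fixes d N K :: nat and rho :: qop and M :: "nat \<Rightarrow> qop"
    and U :: "nat \<Rightarrow> nat \<Rightarrow> nat \<Rightarrow> nat \<Rightarrow> complex"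
  assumes "d \<ge> 2" and "N \<ge> 2" and "K \<ge> 1"
    and "density d (AtB_sys N) rho"
    and "povm d (alice_sys N) K M"
    and "\<forall>i\<in>{1..K}. \<forall>j\<in>{1..N}. unitary_op d {sysB N} (opB N (U i j))"
  shows "P_succ d N rho K M U \<le> complex_of_real ((real N + real d - 1) / (real d * real N))"
proof -
  have d: "d > 0" using assms(1) by simp
  have Npos: "N > 0" using assms(2) by simp
  define Al where "Al = alice_sys N"
  define B where "B = basis d Al"
  have finAl: "finite Al" unfolding Al_def alice_sys_eq by simp
  have finB: "finite B" unfolding B_def using finAl by simp
  have ex: "\<forall>i. \<exists>(r::nat) u. i \<in> {1..K} \<longrightarrow> (\<forall>x\<in>B. \<forall>y\<in>B. M i x y = (\<Sum>k<r. u k x * cnj (u k y)))"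
  proof
    fix i
    show "\<exists>(r::nat) u. i \<in> {1..K} \<longrightarrow> (\<forall>x\<in>B. \<forall>y\<in>B. M i x y = (\<Sum>k<r. u k x * cnj (u k y)))"
    proof (cases "i \<in> {1..K}")
      case True
      then have "psd d Al (M i)" using assms(5) unfolding povm_def Al_def by blast
      then have "\<forall>v. 0 \<le> qf B (M i) v" unfolding psd_def qf_def B_def .
      then show ?thesis using psd_decomp[OF finB] by blast
    qed auto
  qed
  obtain rM :: "nat \<Rightarrow> nat" where h1: "\<forall>i. \<exists>u. i \<in> {1..K} \<longrightarrow> (\<forall>x\<in>B. \<forall>y\<in>B. M i x y = (\<Sum>k<rM i. u k x * cnj (u k y)))"
    using choice[OF ex] by blast
  obtain wM :: "nat \<Rightarrow> nat \<Rightarrow> cfg \<Rightarrow> complex" where Mdec: "\<forall>i. i \<in> {1..K} \<longrightarrow> (\<forall>x\<in>B. \<forall>y\<in>B. M i x y = (\<Sum>k<rM i. wM i k x * cnj (wM i k y)))"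
    using choice[OF h1] by blast
  have "\<forall>v. 0 \<le> qf (basis d (AtB_sys N)) rho v"
    using assms(4) unfolding density_def psd_def qf_def by blast
  then obtain rr :: nat and uu where Rdec: "\<forall>x\<in>basis d (AtB_sys N). \<forall>y\<in>basis d (AtB_sys N). rho x y = (\<Sum>m<rr. uu m x * cnj (uu m y))"
    using psd_decomp[of "basis d (AtB_sys N)" rho] unfolding AtB_eq by auto
  have tr: "trace d (AtB_sys N) rho = 1" using assms(4) unfolding density_def by blast
  have Msum: "\<forall>x\<in>basis d (alice_sys N). \<forall>y\<in>basis d (alice_sys N). (\<Sum>i\<in>{1..K}. M i x y) = idop (alice_sys N) x y"
    using assms(5) unfolding povm_def by blast
  define Uf where "Uf i l = U i (l - N)" for i l
  define Y where "Y i j k m = Yv d (Uf i) (zf d N (uu m) (wM i k)) (N+j)" for i j k m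
  define R where "R i j = (1/real d)^(N+1) * (\<Sum>k<rM i. \<Sum>m<rr. (\<Sum>a\<in>B. (cmod (Y i j k m a))^2) / (real d * real d))" for i j
  define Tm where "Tm i j = (let S = {sysA' N j, sysB N};
            sigma = ptrace d (all_sys N) S
                      (mmul d (all_sys N) (op_ext (alice_sys N) (M i) (all_sys N)) (Omega d N rho));
            V = op_ext {sysB N} (opB N (U i j)) S
        in trace d S (mmul d S (psi_plus d (sysA' N j) (sysB N))
                        (mmul d S (mmul d S V sigma) (adj V))))" for i j
  have P: "P_succ d N rho K M U = (1 / of_nat N) * (\<Sum>j\<in>{1..N}. \<Sum>i\<in>{1..K}. Tm i j)"
    unfolding P_succ_def Tm_def ..
  have TR: "Tm i j = complex_of_real (R i j)" if i: "i \<in> {1..K}" and j: "j \<in> {1..N}" for i j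
  proof -
    have eqU: "U i j = Uf i (N+j)" unfolding Uf_def by simp
    have Md: "\<forall>x\<in>basis d (alice_sys N). \<forall>y\<in>basis d (alice_sys N). M i x y = (\<Sum>k<rM i. wM i k x * cnj (wM i k y))"
      using Mdec i unfolding B_def Al_def by blast
    have "Tm i j = (1/of_nat d)^(N+1) * (\<Sum>k<rM i. \<Sum>m<rr. (\<Sum>a\<in>basis d (alice_sys N). cnj (Y i j k m a) * Y i j k m a) / (of_nat d * of_nat d))"
      unfolding Tm_def eqU Y_def by (rule term_ij[OF j d Md Rdec])
    also have "\<dots> = complex_of_real (R i j)"
      unfolding R_def B_def Al_def by (simp add: sum_cnj_self)
    finally show ?thesis .
  qed
  have Preal: "P_succ d N rho K M U = complex_of_real ((1 / real N) * (\<Sum>j\<in>{1..N}. \<Sum>i\<in>{1..K}. R i j))"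
    unfolding P using TR by simp
  define Zr where "Zr i k m = (\<Sum>a\<in>B. \<Sum>e<d. (cmod (zf d N (uu m) (wM i k) a e))^2)" for i k m
  have VLi: "(\<Sum>j\<in>{1..N}. \<Sum>a\<in>B. (cmod (Y i j k m a))^2) \<le> real d * (real N + real d - 1) * Zr i k m"
    if i: "i \<in> {1..K}" for i k m
  proof -
    define J where "J = {N+1..2*N}"
    have JS: "J \<subseteq> Al" unfolding J_def Al_def alice_sys_eq by auto
    have cJ: "card J = N" unfolding J_def by simp
    have Jne: "J \<noteq> {}" unfolding J_def using Npos by simp
    have UJ: "\<forall>l\<in>J. unit_mat d (Uf i l)"
    proof
      fix l assume "l \<in> J"
      then have "l - N \<in> {1..N}" unfolding J_def by auto
      then show "unit_mat d (Uf i l)" unfolding Uf_def using assms(6) i unitary_unit by blast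
    qed
    have "(\<Sum>j\<in>{1..N}. \<Sum>a\<in>B. (cmod (Y i j k m a))^2) = (\<Sum>l\<in>J. \<Sum>a\<in>B. (cmod (Yv d (Uf i) (zf d N (uu m) (wM i k)) l a))^2)"
    proof -
      have inj: "inj_on ((+) N) {1..N}" by (auto simp: inj_on_def)
      have "(\<Sum>l\<in>(+) N ` {1..N}. \<Sum>a\<in>B. (cmod (Yv d (Uf i) (zf d N (uu m) (wM i k)) l a))^2)
          = (\<Sum>j\<in>{1..N}. \<Sum>a\<in>B. (cmod (Yv d (Uf i) (zf d N (uu m) (wM i k)) (N + j) a))^2)"
        by (simp only: sum.reindex[OF inj] comp_def)
      then show ?thesis unfolding J_def Y_def shift_image by simp
    qed
    also have "\<dots> \<le> real d * (real (card J) + real d - 1) * Zr i k m"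
      unfolding B_def Zr_def by (rule VL[OF finAl JS d UJ Jne])
    finally show ?thesis unfolding cJ .
  qed
  define C0 where "C0 = (1/real d)^(N+1) / (real d * real d)"
  have C0: "C0 \<ge> 0" unfolding C0_def by simp
  have E1: "(\<Sum>j\<in>{1..N}. \<Sum>i\<in>{1..K}. R i j)
      = C0 * (\<Sum>j\<in>{1..N}. \<Sum>i\<in>{1..K}. \<Sum>k<rM i. \<Sum>m<rr. \<Sum>a\<in>B. (cmod (Y i j k m a))^2)"
    unfolding R_def C0_def by (simp add: sum_distrib_left sum_divide_distrib)
  have "(\<Sum>j\<in>{1..N}. \<Sum>i\<in>{1..K}. \<Sum>k<rM i. \<Sum>m<rr. \<Sum>a\<in>B. (cmod (Y i j k m a))^2)
      = (\<Sum>i\<in>{1..K}. \<Sum>k<rM i. \<Sum>m<rr. \<Sum>j\<in>{1..N}. \<Sum>a\<in>B. (cmod (Y i j k m a))^2)"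
    by (rule pull_out3[symmetric])
  also have "\<dots> \<le> (\<Sum>i\<in>{1..K}. \<Sum>k<rM i. \<Sum>m<rr. real d * (real N + real d - 1) * Zr i k m)"
    using VLi by (intro sum_mono) auto
  also have "\<dots> = real d * (real N + real d - 1) * (\<Sum>i\<in>{1..K}. \<Sum>k<rM i. \<Sum>m<rr. Zr i k m)"
    by (simp add: sum_distrib_left)
  also have "(\<Sum>i\<in>{1..K}. \<Sum>k<rM i. \<Sum>m<rr. Zr i k m) = real d ^ (N+1)"
    unfolding Zr_def B_def Al_def
    by (rule zr_total[where I="{1..K}" and d=d and N=N and M=M and rM=rM and wM=wM and rho=rho and rr=rr and uu=uu]) (use Mdec Msum Rdec tr in \<open>auto simp: B_def Al_def\<close>)
  finally have E3: "(\<Sum>j\<in>{1..N}. \<Sum>i\<in>{1..K}. \<Sum>k<rM i. \<Sum>m<rr. \<Sum>a\<in>B. (cmod (Y i j k m a))^2)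
      \<le> real d * (real N + real d - 1) * real d ^ (N+1)" .
  have S: "(\<Sum>j\<in>{1..N}. \<Sum>i\<in>{1..K}. R i j) \<le> (1/real d)^(N+1) / (real d * real d) * (real d * (real N + real d - 1) * real d ^ (N+1))"
    unfolding E1 C0_def[symmetric] using mult_left_mono[OF E3 C0] .
  have "(1/real d)^(N+1) / (real d * real d) * (real d * (real N + real d - 1) * real d ^ (N+1)) = (real N + real d - 1) / real d"
    using d by (simp add: field_simps power_one_over)
  with S have S2: "(\<Sum>j\<in>{1..N}. \<Sum>i\<in>{1..K}. R i j) \<le> (real N + real d - 1) / real d" by simp
  then have "(1 / real N) * (\<Sum>j\<in>{1..N}. \<Sum>i\<in>{1..K}. R i j) \<le> (real N + real d - 1) / (real d * real N)"
    using Npos d by (simp add: field_simps)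
  then show ?thesis unfolding Preal by (simp add: less_eq_complex_def)
qed

end
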